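(* Let $V$ be a vector space over an algebraically closed field $k$, and suppose given: a cubic form $f\in P_3(V)$ of infinite strength; quadratic forms $q_1,\dots,q_r\in P_2(V)$ of infinite collective strength; quadratic forms $q'_1,\dots,q'_s\in P_2(V)$ each of finite strength; and linear forms $\ell_1,\dots,\ell_t\in P_1(V)$. Then for any $a,b_1,\dots,b_r\in k$ there exists $v\in V$ with $f(v)=a$, $q_i(v)=b_i$ for $1\le i\le r$, $q'_i(v)=0$ for $1\le i\le s$, and $\ell_i(v)=0$ for $1\le i\le t$.
   Context: For a $k$-vector space $V$ with basis and dual coordinates $x_i$, $P_n(V)$ is the space of degree-$n$ polynomial functions on $V$: formal, possibly infinite, $k$-linear combinations of degree-$n$ monomials in the $x_i$, evaluable at any $v\in V$. $P(V)=\bigoplus_{n\ge0}P_n(V)$. The strength of a homogeneous $f\in P_n(V)$, $n\ge1$, is the least $s$ with $f=\sum_{i=1}^s g_ih_i$, $g_i,h_i$ homogeneous in $P(V)$ of positive degree less than $n$ ($\infty$ if none exists). A collection of elements of $P(V)$ has infinite collective strength if every nontrivial $k$-linear combination of those members having a common degree has infinite strength. *)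

theory Defs
  imports "HOL-Computational_Algebra.Polynomial" "HOL-Library.Multiset"
begin

(* Vectors of V: finitely supported coordinate functions w.r.t. a basis indexed by 'i.
   Polynomial functions: formal (possibly infinite) k-linear combinations of monomials;
   a monomial in the coordinates x_i is a finite multiset of indices; a polynomial is its
   coefficient function. *)

type_synonym ('i,'k) fpoly = "'i multiset \<Rightarrow> 'k"

definition vec :: "('i \<Rightarrow> 'k::zero) \<Rightarrow> bool" where
  "vec v \<longleftrightarrow> finite {i. v i \<noteq> 0}"

definition hom :: "nat \<Rightarrow> ('i,'k::zero) fpoly \<Rightarrow> bool" where
  "hom n f \<longleftrightarrow> (\<forall>m. f m \<noteq> 0 \<longrightarrow> size m = n)"

definition pmul :: "('i,'k::comm_semiring_1) fpoly \<Rightarrow> ('i,'k) fpoly \<Rightarrow> ('i,'k) fpoly" where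
  "pmul g h = (\<lambda>m. \<Sum>a\<in>{a. a \<subseteq># m}. g a * h (m - a))"

definition peval :: "('i,'k::comm_semiring_1) fpoly \<Rightarrow> ('i \<Rightarrow> 'k) \<Rightarrow> 'k" where
  "peval f v = (\<Sum>m\<in>{m. f m \<noteq> 0 \<and> set_mset m \<subseteq> {i. v i \<noteq> 0}}. f m * (\<Prod>i\<in>#m. v i))"

definition finite_strength :: "nat \<Rightarrow> ('i,'k::comm_semiring_1) fpoly \<Rightarrow> bool" where
  "finite_strength n f \<longleftrightarrow>
     (\<exists>(s::nat) (g::nat \<Rightarrow> ('i,'k) fpoly) h dg dh.
        (\<forall>j<s. 0 < dg j \<and> dg j < n \<and> 0 < dh j \<and> dh j < n \<and> hom (dg j) (g j) \<and> hom (dh j) (h j))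
        \<and> f = (\<lambda>m. \<Sum>j<s. pmul (g j) (h j) m))"

definition infinite_strength :: "nat \<Rightarrow> ('i,'k::comm_semiring_1) fpoly \<Rightarrow> bool" where
  "infinite_strength n f \<longleftrightarrow> \<not> finite_strength n f"

definition infinite_collective_strength :: "nat \<Rightarrow> nat \<Rightarrow> (nat \<Rightarrow> ('i,'k::comm_semiring_1) fpoly) \<Rightarrow> bool" where
  "infinite_collective_strength n r q \<longleftrightarrow>
     (\<forall>c::nat \<Rightarrow> 'k. (\<exists>j<r. c j \<noteq> 0) \<longrightarrow> infinite_strength n (\<lambda>m. \<Sum>j<r. c j * q j m))"

end

theory Submission
  imports Defs
begin


definition vadd :: "('i \<Rightarrow> 'k::comm_ring_1) \<Rightarrow> ('i \<Rightarrow> 'k) \<Rightarrow> ('i \<Rightarrow> 'k)" where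
  "vadd u w = (\<lambda>i. u i + w i)"
definition vsc :: "'k::comm_ring_1 \<Rightarrow> ('i \<Rightarrow> 'k) \<Rightarrow> ('i \<Rightarrow> 'k)" where
  "vsc c u = (\<lambda>i. c * u i)"
definition vsum :: "'a set \<Rightarrow> ('a \<Rightarrow> 'i \<Rightarrow> 'k::comm_ring_1) \<Rightarrow> ('i \<Rightarrow> 'k)" where
  "vsum L X = (\<lambda>i. \<Sum>l\<in>L. X l i)"
definition supp :: "('i \<Rightarrow> 'k::zero) \<Rightarrow> 'i set" where "supp v = {i. v i \<noteq> 0}"
definition pv :: "'i multiset \<Rightarrow> ('i \<Rightarrow> 'k::comm_semiring_1) \<Rightarrow> 'k" where
  "pv m v = (\<Prod>i\<in>#m. v i)"
definition uv :: "'i \<Rightarrow> 'i \<Rightarrow> 'k::comm_ring_1" where "uv i = (\<lambda>j. if j = i then 1 else 0)"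
definition lin :: "(('i \<Rightarrow> 'k::comm_ring_1) \<Rightarrow> 'k) \<Rightarrow> bool" where
  "lin \<phi> \<longleftrightarrow> (\<forall>u w. vec u \<longrightarrow> vec w \<longrightarrow> \<phi> (vadd u w) = \<phi> u + \<phi> w) \<and> (\<forall>c u. vec u \<longrightarrow> \<phi> (vsc c u) = c * \<phi> u)"

lemma vec_supp: "vec v \<longleftrightarrow> finite (supp v)" by (simp add: vec_def supp_def)
lemma supp_vadd: "supp (vadd u w) \<subseteq> supp u \<union> supp w" by (auto simp: supp_def vadd_def)
lemma supp_vsc: "supp (vsc c u) \<subseteq> supp u" by (auto simp: supp_def vsc_def)
lemma vec_vadd[simp]: "vec u \<Longrightarrow> vec w \<Longrightarrow> vec (vadd u w)"
  by (meson finite_UnI finite_subset supp_vadd vec_supp)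
lemma vec_vsc[simp]: "vec u \<Longrightarrow> vec (vsc c u)"
  by (meson finite_subset supp_vsc vec_supp)
lemma vec_zero[simp]: "vec (\<lambda>_. 0)" by (simp add: vec_def)
lemma vec_uv[simp]: "vec (uv i)" by (simp add: vec_def uv_def)
lemma vec_upd[simp]: "vec v \<Longrightarrow> vec (v(i:=s))"
proof -
  assume "vec v"
  have "{j. (v(i:=s)) j \<noteq> 0} \<subseteq> insert i {j. v j \<noteq> 0}" by auto
  thus ?thesis using \<open>vec v\<close> unfolding vec_def by (meson finite_insert finite_subset)
qed
lemma supp_vsum: "supp (vsum L X) \<subseteq> (\<Union>l\<in>L. supp (X l))"
proof
  fix i assume "i \<in> supp (vsum L X)"
  hence "(\<Sum>l\<in>L. X l i) \<noteq> 0" by (simp add: supp_def vsum_def)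
  then obtain l where "l \<in> L" "X l i \<noteq> 0" by (meson sum.neutral)
  thus "i \<in> (\<Union>l\<in>L. supp (X l))" by (auto simp: supp_def)
qed
lemma vec_vsum[simp]: "finite L \<Longrightarrow> (\<And>l. l \<in> L \<Longrightarrow> vec (X l)) \<Longrightarrow> vec (vsum L X)"
proof -
  assume a: "finite L" "\<And>l. l \<in> L \<Longrightarrow> vec (X l)"
  have "finite (\<Union>l\<in>L. supp (X l))" using a by (simp add: vec_supp)
  thus ?thesis using supp_vsum[of L X] by (simp add: vec_supp finite_subset)
qed
lemma vsum_insert: "finite L \<Longrightarrow> l \<notin> L \<Longrightarrow> vsum (insert l L) X = vadd (X l) (vsum L X)"
  by (simp add: vsum_def vadd_def)
lemma vsum_empty[simp]: "vsum {} X = (\<lambda>_. 0)" by (simp add: vsum_def)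

lemma lin_zero: "lin \<phi> \<Longrightarrow> \<phi> (\<lambda>_. 0) = 0"
proof -
  assume "lin \<phi>"
  hence "\<phi> (vsc 0 (\<lambda>_. 0)) = 0 * \<phi> (\<lambda>_. 0)" unfolding lin_def by (metis vec_zero)
  thus ?thesis by (simp add: vsc_def)
qed

lemma lin_vsum: assumes "lin \<phi>" shows "finite L \<Longrightarrow> (\<And>l. l \<in> L \<Longrightarrow> vec (X l)) \<Longrightarrow> \<phi> (vsum L X) = (\<Sum>l\<in>L. \<phi> (X l))"
proof (induction L rule: finite_induct)
  case empty thus ?case by (simp add: lin_zero assms)
next
  case (insert l L) thus ?case using assms by (simp add: vsum_insert lin_def)
qed

lemma vec_decomp: "finite S \<Longrightarrow> supp v \<subseteq> S \<Longrightarrow> v = vsum S (\<lambda>i. vsc (v i) (uv i))"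
proof
  fix j assume "finite S" "supp v \<subseteq> S"
  show "v j = vsum S (\<lambda>i. vsc (v i) (uv i)) j"
  proof (cases "j \<in> S")
    case True
    have "(\<Sum>i\<in>S. v i * (if j = i then 1 else 0)) = (\<Sum>i\<in>S. if i = j then v i else 0)"
      by (intro sum.cong) auto
    also have "\<dots> = v j" using True \<open>finite S\<close> by simp
    finally have "(\<Sum>i\<in>S. v i * (if j = i then 1 else 0)) = v j" .
    thus ?thesis by (simp add: vsum_def vsc_def uv_def)
  next
    case False
    hence "v j = 0" using \<open>supp v \<subseteq> S\<close> by (auto simp: supp_def)
    thus ?thesis using False by (auto simp: vsum_def vsc_def uv_def intro!: sum.neutral)
  qed
qed

lemma lin_decomp: "lin \<phi> \<Longrightarrow> finite S \<Longrightarrow> supp v \<subseteq> S \<Longrightarrow> \<phi> v = (\<Sum>i\<in>S. v i * \<phi> (uv i))"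
proof -
  assume a: "lin \<phi>" "finite S" "supp v \<subseteq> S"
  have "\<phi> v = \<phi> (vsum S (\<lambda>i. vsc (v i) (uv i)))" using vec_decomp[OF a(2,3)] by simp
  also have "\<dots> = (\<Sum>i\<in>S. \<phi> (vsc (v i) (uv i)))" using a by (intro lin_vsum) auto
  also have "\<dots> = (\<Sum>i\<in>S. v i * \<phi> (uv i))" using a(1) by (simp add: lin_def)
  finally show ?thesis .
qed

lemma lin_eq_zero: "lin \<phi> \<Longrightarrow> (\<forall>i. \<phi> (uv i) = 0) \<Longrightarrow> vec v \<Longrightarrow> \<phi> v = 0"
  using lin_decomp[of \<phi> "supp v" v] by (simp add: vec_supp)

lemma peval_eq:
  fixes F :: "('i,'k::comm_semiring_1) fpoly"
  assumes "hom n F" "finite S" "supp v \<subseteq> S"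
  shows "peval F v = (\<Sum>m\<in>multisets_of_size S n. F m * pv m v)"
  unfolding peval_def pv_def
proof (rule sum.mono_neutral_left)
  show "finite (multisets_of_size S n)" using assms by auto
  show "{m. F m \<noteq> 0 \<and> set_mset m \<subseteq> {i. v i \<noteq> 0}} \<subseteq> multisets_of_size S n"
    using assms by (auto simp: hom_def multisets_of_size_def supp_def)
  show "\<forall>i\<in>multisets_of_size S n - {m. F m \<noteq> 0 \<and> set_mset m \<subseteq> {i. v i \<noteq> 0}}. F i * (\<Prod>i\<in>#i. v i) = 0"
  proof
    fix m assume "m \<in> multisets_of_size S n - {m. F m \<noteq> 0 \<and> set_mset m \<subseteq> {i. v i \<noteq> 0}}"
    hence "F m = 0 \<or> (\<exists>x\<in>#m. v x = 0)" by auto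
    thus "F m * (\<Prod>i\<in>#m. v i) = 0"
    proof
      assume "\<exists>x\<in>#m. v x = 0"
      then obtain x where "x \<in># m" "v x = 0" by auto
      then obtain m' where "m = add_mset x m'" by (metis multi_member_split)
      thus ?thesis using \<open>v x = 0\<close> by simp
    qed simp
  qed
qed

lemma pv_add: "pv (a + b) v = pv a v * pv b v" by (simp add: pv_def)
lemma pv_vsc: "pv m (vsc c u) = c ^ size m * pv m u"
  by (induction m) (simp_all add: pv_def vsc_def)

definition padd :: "('i,'k::comm_semiring_1) fpoly \<Rightarrow> ('i,'k) fpoly \<Rightarrow> ('i,'k) fpoly" where
  "padd F G = (\<lambda>m. F m + G m)"
definition psc :: "'k::comm_semiring_1 \<Rightarrow> ('i,'k) fpoly \<Rightarrow> ('i,'k) fpoly" where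
  "psc c F = (\<lambda>m. c * F m)"

lemma hom_padd[simp]: "hom n F \<Longrightarrow> hom n G \<Longrightarrow> hom n (padd F G)" unfolding hom_def padd_def by (metis add.right_neutral)
lemma hom_psc[simp]: "hom n F \<Longrightarrow> hom n (psc c F)" unfolding hom_def psc_def by (metis mult_zero_right)
lemma hom_zero[simp]: "hom n (\<lambda>_. 0)" by (simp add: hom_def)


lemma peval_padd:
  assumes "hom n F" "hom n G" "vec v"
  shows "peval (padd F G) v = peval F v + peval G v"
proof -
  have f: "finite (supp v)" using assms by (simp add: vec_supp)
  have "peval (padd F G) v = (\<Sum>m\<in>multisets_of_size (supp v) n. padd F G m * pv m v)"
    using assms f by (intro peval_eq) auto
  also have "\<dots> = (\<Sum>m\<in>multisets_of_size (supp v) n. F m * pv m v) + (\<Sum>m\<in>multisets_of_size (supp v) n. G m * pv m v)"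
    by (simp add: padd_def sum.distrib distrib_right)
  also have "\<dots> = peval F v + peval G v" using assms f by (simp add: peval_eq)
  finally show ?thesis .
qed

lemma peval_psc:
  assumes "hom n F" "vec v"
  shows "peval (psc c F) v = c * peval F v"
proof -
  have f: "finite (supp v)" using assms by (simp add: vec_supp)
  have "peval (psc c F) v = (\<Sum>m\<in>multisets_of_size (supp v) n. psc c F m * pv m v)"
    using assms f by (intro peval_eq) auto
  also have "\<dots> = c * (\<Sum>m\<in>multisets_of_size (supp v) n. F m * pv m v)"
    by (simp add: psc_def sum_distrib_left mult.assoc)
  also have "\<dots> = c * peval F v" using assms f by (simp add: peval_eq)
  finally show ?thesis .
qed

lemma peval_vsc:
  fixes F :: "('i,'k::comm_ring_1) fpoly"
  assumes "hom n F" "vec u"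
  shows "peval F (vsc c u) = c ^ n * peval F u"
proof -
  have "peval F (vsc c u) = (\<Sum>m\<in>multisets_of_size (supp u) n. F m * pv m (vsc c u))"
    using assms supp_vsc[of c u] by (intro peval_eq) (auto simp: vec_supp)
  also have "\<dots> = (\<Sum>m\<in>multisets_of_size (supp u) n. c ^ n * (F m * pv m u))"
    by (intro sum.cong) (auto simp: pv_vsc multisets_of_size_def)
  also have "\<dots> = c ^ n * peval F u" using assms
    by (simp add: peval_eq[of n F "supp u" u] vec_supp sum_distrib_left)
  finally show ?thesis .
qed

lemma peval_comb:
  fixes q :: "'a \<Rightarrow> ('i,'k::comm_ring_1) fpoly"
  assumes "finite I" "\<forall>j\<in>I. hom n (q j)" "vec v"
  shows "hom n (\<lambda>m. \<Sum>j\<in>I. c j * q j m) \<and> peval (\<lambda>m. \<Sum>j\<in>I. c j * q j m) v = (\<Sum>j\<in>I. c j * peval (q j) v)"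
proof
  show h: "hom n (\<lambda>m. \<Sum>j\<in>I. c j * q j m)"
    using assms unfolding hom_def by (metis (no_types, lifting) mult_zero_right sum.neutral)
  have "peval (\<lambda>m. \<Sum>j\<in>I. c j * q j m) v = (\<Sum>m\<in>multisets_of_size (supp v) n. (\<Sum>j\<in>I. c j * q j m) * pv m v)"
    using assms h by (intro peval_eq) (auto simp: vec_supp)
  also have "\<dots> = (\<Sum>j\<in>I. c j * (\<Sum>m\<in>multisets_of_size (supp v) n. q j m * pv m v))"
    by (simp add: sum_distrib_right sum_distrib_left mult.assoc sum.swap[of _ I])
  also have "\<dots> = (\<Sum>j\<in>I. c j * peval (q j) v)"
    using assms by (intro sum.cong refl) (simp add: peval_eq[of n _ "supp v" v] vec_supp)
  finally show "peval (\<lambda>m. \<Sum>j\<in>I. c j * q j m) v = (\<Sum>j\<in>I. c j * peval (q j) v)" .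
qed

lemma fin_sub: "finite {x. x \<subseteq># (m::'a multiset)}"
proof -
  have "{x. x \<subseteq># m} \<subseteq> (\<Union>n\<in>{..size m}. multisets_of_size (set_mset m) n)"
    by (auto simp: multisets_of_size_def dest: set_mset_mono size_mset_mono)
  thus ?thesis by (rule finite_subset) auto
qed

lemma hom_pmul: "hom a G \<Longrightarrow> hom b H \<Longrightarrow> hom (a + b) (pmul G H)"
proof (unfold hom_def, intro allI impI)
  fix m assume h: "\<forall>m. G m \<noteq> 0 \<longrightarrow> size m = a" "\<forall>m. H m \<noteq> 0 \<longrightarrow> size m = b" "pmul G H m \<noteq> 0"
  then obtain x where "x \<subseteq># m" "G x * H (m - x) \<noteq> 0" unfolding pmul_def
    by (metis (mono_tags, lifting) mem_Collect_eq sum.neutral)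
  hence "G x \<noteq> 0" "H (m - x) \<noteq> 0" by auto
  hence "size x = a" "size (m - x) = b" using h by auto
  moreover have "size m = size x + size (m - x)" using \<open>x \<subseteq># m\<close>
    by (metis size_union subset_mset.add_diff_inverse)
  ultimately show "size m = a + b" by simp
qed

lemma peval_pmul:
  fixes G H :: "('i,'k::comm_semiring_1) fpoly"
  assumes hg: "hom a G" and hh: "hom b H" and v: "vec v"
  shows "peval (pmul G H) v = peval G v * peval H v"
proof -
  define S where "S = supp v"
  have fS: "finite S" using v by (simp add: S_def vec_supp)
  define M where "M = multisets_of_size S (a+b)"
  define XX :: "'i multiset \<Rightarrow> 'i multiset set" where "XX = (\<lambda>m. {x. x \<subseteq># m \<and> size x = a})"
  have fM: "finite M" using fS by (auto simp: M_def)
  have fX: "\<And>m. finite (XX m)" unfolding XX_def by (rule finite_subset[OF _ fin_sub]) auto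
  have "peval (pmul G H) v = (\<Sum>m\<in>M. pmul G H m * pv m v)"
    unfolding M_def using hom_pmul[OF hg hh] fS by (intro peval_eq) (auto simp: S_def)
  also have "\<dots> = (\<Sum>m\<in>M. \<Sum>x\<in>XX m. G x * H (m - x) * pv m v)"
  proof (intro sum.cong refl)
    fix m
    have "pmul G H m = (\<Sum>x\<in>XX m. G x * H (m - x))"
      unfolding pmul_def XX_def
      apply (rule sum.mono_neutral_right[OF fin_sub])
       apply blast
      using hg unfolding hom_def by (metis (mono_tags, lifting) DiffE mem_Collect_eq mult_zero_left)
    thus "pmul G H m * pv m v = (\<Sum>x\<in>XX m. G x * H (m - x) * pv m v)"
      by (simp add: sum_distrib_right)
  qed
  also have "\<dots> = (\<Sum>(m,x)\<in>Sigma M XX. G x * H (m - x) * pv m v)"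
    using fM fX by (intro sum.Sigma) auto
  also have "\<dots> = (\<Sum>(x,y)\<in>multisets_of_size S a \<times> multisets_of_size S b. G x * pv x v * (H y * pv y v))"
  proof (rule sum.reindex_bij_witness[where i = "\<lambda>(x,y). (x + y, x)" and j = "\<lambda>(m,x). (x, m - x)"])
    show "\<And>p. p \<in> Sigma M XX \<Longrightarrow> (case case p of (m, x) \<Rightarrow> (x, m - x) of (x, y) \<Rightarrow> (x + y, x)) = p"
      by (auto simp: XX_def)
    show "\<And>p. p \<in> Sigma M XX \<Longrightarrow> (case p of (m, x) \<Rightarrow> (x, m - x)) \<in> multisets_of_size S a \<times> multisets_of_size S b"
      by (auto simp: XX_def M_def multisets_of_size_def size_Diff_submset)
         (meson in_diffD mset_subset_eqD subsetD)+
    show "\<And>p. p \<in> multisets_of_size S a \<times> multisets_of_size S b \<Longrightarrow> (case case p of (x, y) \<Rightarrow> (x + y, x) of (m, x) \<Rightarrow> (x, m - x)) = p"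
      by auto
    show "\<And>p. p \<in> multisets_of_size S a \<times> multisets_of_size S b \<Longrightarrow> (case p of (x, y) \<Rightarrow> (x + y, x)) \<in> Sigma M XX"
      by (auto simp: XX_def M_def multisets_of_size_def)
    show "\<And>p. p \<in> Sigma M XX \<Longrightarrow> (case case p of (m, x) \<Rightarrow> (x, m - x) of (x, y) \<Rightarrow> G x * pv x v * (H y * pv y v)) = (case p of (m, x) \<Rightarrow> G x * H (m - x) * pv m v)"
      by (auto simp: XX_def pv_add[symmetric] mult_ac)
  qed
  also have "\<dots> = (\<Sum>x\<in>multisets_of_size S a. G x * pv x v) * (\<Sum>y\<in>multisets_of_size S b. H y * pv y v)"
    by (simp add: sum_product sum.cartesian_product)
  also have "\<dots> = peval G v * peval H v"
    using hg hh fS by (simp add: peval_eq S_def)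
  finally show ?thesis .
qed


lemma peval_hom1:
  fixes F :: "('i,'k::comm_semiring_1) fpoly"
  assumes "hom 1 F" "finite S" "supp v \<subseteq> S"
  shows "peval F v = (\<Sum>i\<in>S. F {#i#} * v i)"
proof -
  have e: "multisets_of_size S 1 = (\<lambda>i. {#i#}) ` S"
    apply (auto simp: multisets_of_size_def)
    subgoal for x using size_1_singleton_mset[of x] by force
    done
  have "peval F v = (\<Sum>m\<in>multisets_of_size S 1. F m * pv m v)" using assms by (rule peval_eq)
  also have "\<dots> = (\<Sum>i\<in>S. F {#i#} * pv {#i#} v)" unfolding e
    by (subst sum.reindex) (auto simp: inj_on_def)
  finally show ?thesis by (simp add: pv_def)
qed

definition lf :: "(('i \<Rightarrow> 'k) \<Rightarrow> 'k) \<Rightarrow> ('i,'k::comm_ring_1) fpoly" where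
  "lf \<phi> = (\<lambda>m. if size m = 1 then \<phi> (uv (the_elem (set_mset m))) else 0)"
lemma hom_lf: "hom 1 (lf \<phi>)" by (simp add: hom_def lf_def)
lemma peval_lf: "lin \<phi> \<Longrightarrow> vec v \<Longrightarrow> peval (lf \<phi>) v = \<phi> v"
  using peval_hom1[OF hom_lf, of "supp v" v \<phi>] lin_decomp[of \<phi> "supp v" v]
  by (simp add: vec_supp lf_def mult.commute)

lemma lin_peval1: "hom 1 F \<Longrightarrow> lin (peval F)"
proof -
  assume h: "hom 1 F"
  have "peval F (vadd u w) = peval F u + peval F w" if "vec u" "vec w" for u w
  proof -
    let ?S = "supp u \<union> supp w"
    have f: "finite ?S" using that by (simp add: vec_supp)
    have "peval F (vadd u w) = (\<Sum>i\<in>?S. F {#i#} * vadd u w i)"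
      using h f supp_vadd[of u w] by (intro peval_hom1) auto
    also have "\<dots> = (\<Sum>i\<in>?S. F {#i#} * u i) + (\<Sum>i\<in>?S. F {#i#} * w i)"
      by (simp add: vadd_def distrib_left sum.distrib)
    also have "(\<Sum>i\<in>?S. F {#i#} * u i) = peval F u" using h f by (intro peval_hom1[symmetric]) auto
    also have "(\<Sum>i\<in>?S. F {#i#} * w i) = peval F w" using h f by (intro peval_hom1[symmetric]) auto
    finally show ?thesis .
  qed
  moreover have "peval F (vsc c u) = c * peval F u" if "vec u" for c u
    using peval_vsc[OF h that] by simp
  ultimately show ?thesis by (simp add: lin_def)
qed

definition Xc :: "'i \<Rightarrow> ('i,'k::comm_semiring_1) fpoly" where "Xc i = (\<lambda>m. if m = {#i#} then 1 else 0)"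
definition restr :: "'i \<Rightarrow> ('i,'k::zero) fpoly \<Rightarrow> ('i,'k) fpoly" where "restr i F = (\<lambda>m. if i \<in># m then 0 else F m)"
definition der :: "'i \<Rightarrow> ('i,'k) fpoly \<Rightarrow> ('i,'k) fpoly" where "der i F = (\<lambda>m. F (add_mset i m))"

lemma hom_Xc: "hom 1 (Xc i)" by (simp add: hom_def Xc_def)
lemma hom_restr: "hom n F \<Longrightarrow> hom n (restr i F)" by (simp add: hom_def restr_def)
lemma hom_der: "hom (Suc n) F \<Longrightarrow> hom n (der i F)" unfolding hom_def der_def by (metis Suc_inject size_add_mset)

lemma pmul_Xc: "pmul (Xc i) G m = (if i \<in># m then G (m - {#i#}) else 0)"
proof -
  have "pmul (Xc i) G m = (\<Sum>x\<in>{x. x \<subseteq># m}. if x = {#i#} then G (m - x) else 0)"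
    unfolding pmul_def Xc_def by (intro sum.cong) auto
  also have "\<dots> = (if {#i#} \<in> {x. x \<subseteq># m} then G (m - {#i#}) else 0)"
    by (rule sum.delta[OF fin_sub])
  finally show ?thesis by simp
qed

lemma split_poly: "padd (restr i F) (pmul (Xc i) (der i F)) = F"
  by (rule ext) (auto simp: padd_def restr_def pmul_Xc der_def insert_DiffM)

lemma peval_Xc: "vec v \<Longrightarrow> peval (Xc i) v = v i"
proof -
  assume v: "vec v"
  let ?S = "insert i (supp v)"
  have "peval (Xc i) v = (\<Sum>j\<in>?S. Xc i {#j#} * v j)"
    using v by (intro peval_hom1 hom_Xc) (auto simp: vec_supp)
  also have "\<dots> = (\<Sum>j\<in>?S. if j = i then v j else 0)" by (intro sum.cong) (auto simp: Xc_def)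
  also have "\<dots> = v i" using v by (simp add: vec_supp)
  finally show ?thesis .
qed

lemma peval_split:
  fixes F :: "('i,'k::comm_ring_1) fpoly"
  assumes "hom (Suc n) F" "vec v"
  shows "peval F v = peval (restr i F) v + v i * peval (der i F) v"
proof -
  have "peval F v = peval (padd (restr i F) (pmul (Xc i) (der i F))) v" by (simp add: split_poly)
  also have "\<dots> = peval (restr i F) v + peval (pmul (Xc i) (der i F)) v"
    using assms hom_pmul[OF hom_Xc hom_der[OF assms(1)], of i i]
    by (intro peval_padd[where n = "Suc n"]) (auto intro: hom_restr)
  also have "\<dots> = peval (restr i F) v + v i * peval (der i F) v"
    using assms by (simp add: peval_pmul[OF hom_Xc hom_der[OF assms(1)]] peval_Xc)
  finally show ?thesis .
qed

lemma restr_cong: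
  fixes F :: "('i,'k::comm_ring_1) fpoly"
  assumes "hom n F" "vec v" "vec w" "\<forall>j. j \<noteq> i \<longrightarrow> v j = w j"
  shows "peval (restr i F) v = peval (restr i F) w"
proof -
  let ?S = "supp v \<union> supp w"
  have f: "finite ?S" using assms by (simp add: vec_supp)
  have "peval (restr i F) v = (\<Sum>m\<in>multisets_of_size ?S n. restr i F m * pv m v)"
    using assms f by (intro peval_eq hom_restr) auto
  also have "\<dots> = (\<Sum>m\<in>multisets_of_size ?S n. restr i F m * pv m w)"
  proof (intro sum.cong refl)
    fix m
    show "restr i F m * pv m v = restr i F m * pv m w"
    proof (cases "i \<in># m")
      case False
      hence "image_mset v m = image_mset w m" using assms(4) by (intro image_mset_cong) auto
      thus ?thesis by (simp add: pv_def)
    qed (simp add: restr_def)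
  qed
  also have "\<dots> = peval (restr i F) w"
    using assms f by (intro peval_eq[symmetric] hom_restr) auto
  finally show ?thesis .
qed

lemma hom0_const:
  fixes F :: "('i,'k::comm_semiring_1) fpoly"
  assumes "hom 0 F" "vec v" shows "peval F v = F {#}"
  using peval_eq[OF assms(1), of "supp v" v] assms(2) by (simp add: vec_supp pv_def)

lemma poly_coord:
  fixes F :: "('i,'k::comm_ring_1) fpoly"
  assumes "hom n F" "vec v"
  shows "\<exists>p. \<forall>s. peval F (v(i:=s)) = poly p s"
  using assms(1)
proof (induction n arbitrary: F)
  case 0
  show ?case
  proof (rule exI[of _ "[:F {#}:]"], rule allI)
    fix s show "peval F (v(i:=s)) = poly [:F {#}:] s" using hom0_const[OF 0 vec_upd[OF assms(2)]] by simp
  qed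
next
  case (Suc n)
  obtain p where p: "\<forall>s. peval (der i F) (v(i:=s)) = poly p s"
    using Suc.IH[OF hom_der[OF Suc.prems]] by blast
  let ?c = "peval (restr i F) v"
  have "peval F (v(i:=s)) = poly (pCons ?c p) s" for s
  proof -
    have "peval F (v(i:=s)) = peval (restr i F) (v(i:=s)) + (v(i:=s)) i * peval (der i F) (v(i:=s))"
      by (rule peval_split[OF Suc.prems vec_upd[OF assms(2)]])
    hence "peval F (v(i:=s)) = peval (restr i F) (v(i:=s)) + s * peval (der i F) (v(i:=s))"
      by (simp only: fun_upd_same)
    also have "peval (restr i F) (v(i:=s)) = ?c"
      using assms Suc.prems by (intro restr_cong) auto
    finally show ?thesis using p[rule_format, of s] by (simp only: poly_pCons)
  qed
  thus ?case by blast
qed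

lemma infinite_alg: "infinite (UNIV :: 'k::alg_closed_field set)"
proof
  assume fin: "finite (UNIV :: 'k set)"
  define q :: "'k poly" where "q = (\<Prod>a\<in>UNIV. [:-a, 1:])"
  have "degree q = (\<Sum>a\<in>(UNIV::'k set). 1)" unfolding q_def
    by (subst degree_prod_eq_sum_degree) auto
  also have "\<dots> = card (UNIV :: 'k set)" by simp
  also have "\<dots> > 0" using fin by (simp add: card_gt_0_iff)
  finally have dq: "degree q > 0" .
  hence "degree (q + 1) = degree q" by (intro degree_add_eq_left) simp
  then obtain x where "poly (q + 1) x = 0" using alg_closed_imp_poly_has_root[of "q + 1"] dq by auto
  moreover have "poly q x = 0" unfolding q_def poly_prod
    by (rule prod_zero) (use fin in auto)
  ultimately show False by simp
qed

lemma IDENT: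
  fixes F :: "('i,'k::alg_closed_field) fpoly"
  assumes "hom n F" "\<forall>v. vec v \<longrightarrow> peval F v = 0"
  shows "F = (\<lambda>_. 0)"
  using assms
proof (induction n arbitrary: F)
  case 0
  have "F {#} = 0" using 0 hom0_const[OF 0(1) vec_zero] by simp
  with 0 show ?case by (auto simp: hom_def)
next
  case (Suc n)
  have dz: "der i F = (\<lambda>_. 0)" for i
  proof (rule Suc.IH[OF hom_der[OF Suc.prems(1)]], intro allI impI)
    fix w :: "'i \<Rightarrow> 'k" assume w: "vec w"
    obtain p where p: "\<forall>s. peval (der i F) (w(i:=s)) = poly p s"
      using poly_coord[OF hom_der[OF Suc.prems(1)] w] by blast
    have r0: "peval (restr i F) (w(i:=s)) = 0" for s
    proof -
      have "peval (restr i F) (w(i:=s)) = peval (restr i F) (w(i:=0))"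
        using Suc.prems w by (intro restr_cong) auto
      also have "\<dots> = peval F (w(i:=0))"
        using peval_split[OF Suc.prems(1), of "w(i:=0)" i] w by simp
      also have "\<dots> = 0" using Suc.prems(2) vec_upd[OF w] by blast
      finally show ?thesis .
    qed
    have ps: "poly p s = 0" if "s \<noteq> 0" for s
    proof -
      have "0 = peval F (w(i:=s))" using Suc.prems(2) vec_upd[OF w] by metis
      also have "\<dots> = s * poly p s" using peval_split[OF Suc.prems(1), of "w(i:=s)" i] w r0 p by simp
      finally show ?thesis using that by simp
    qed
    have "p = 0"
    proof (rule ccontr)
      assume "p \<noteq> 0"
      hence "finite {x. poly p x = 0}" by (rule poly_roots_finite)
      moreover have "UNIV - {0} \<subseteq> {x. poly p x = 0}" using ps by auto
      ultimately have "finite (UNIV - {0::'k})" by (rule finite_subset[rotated])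
      thus False using infinite_alg by (metis Diff_infinite_finite finite.emptyI finite_insert)
    qed
    thus "peval (der i F) w = 0" using p[rule_format, of "w i"] by simp
  qed
  show ?case
  proof
    fix m show "F m = 0"
    proof (rule ccontr)
      assume "F m \<noteq> 0"
      hence "size m = Suc n" using Suc.prems by (simp add: hom_def)
      then obtain i where "i \<in># m" using size_eq_Suc_imp_elem by blast
      hence "F m = der i F (m - {#i#})" by (simp add: der_def insert_DiffM)
      with dz \<open>F m \<noteq> 0\<close> show False by simp
    qed
  qed
qed

lemma fs_zero: "finite_strength n (\<lambda>_. 0)"
  unfolding finite_strength_def by (rule exI[of _ 0]) auto

lemma inf_nonzero: "infinite_strength n F \<Longrightarrow> F \<noteq> (\<lambda>_. 0)"
  using fs_zero by (auto simp: infinite_strength_def)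

lemma fs_add:
  fixes F :: "('i,'k::comm_semiring_1) fpoly"
  assumes "finite_strength n F" "0 < a" "a < n" "0 < b" "b < n" "hom a g" "hom b h"
  shows "finite_strength n (padd F (pmul g h))"
proof -
  from assms(1) show ?thesis unfolding finite_strength_def
  proof (elim exE conjE)
    fix s :: nat and g0 h0 :: "nat \<Rightarrow> ('i,'k) fpoly" and dg dh :: "nat \<Rightarrow> nat"
    assume H: "\<forall>j<s. 0 < dg j \<and> dg j < n \<and> 0 < dh j \<and> dh j < n \<and> hom (dg j) (g0 j) \<and> hom (dh j) (h0 j)"
      and F: "F = (\<lambda>m. \<Sum>j<s. pmul (g0 j) (h0 j) m)"
    show "\<exists>(s::nat) (gg::nat \<Rightarrow> ('i,'k) fpoly) hh (dg::nat\<Rightarrow>nat) (dh::nat\<Rightarrow>nat). (\<forall>j<s. 0 < dg j \<and> dg j < n \<and> 0 < dh j \<and> dh j < n \<and> hom (dg j) (gg j) \<and> hom (dh j) (hh j))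
        \<and> padd F (pmul g h) = (\<lambda>m. \<Sum>j<s. pmul (gg j) (hh j) m)"
      apply (rule exI[where x="Suc s"], rule exI[where x="g0(s:=g)"], rule exI[where x="h0(s:=h)"],
          rule exI[where x="dg(s:=a)"], rule exI[where x="dh(s:=b)"], rule conjI)
      using H assms apply (auto simp: less_Suc_eq)[1]
      by (rule ext) (simp add: F padd_def)
  qed
qed

lemma pmul_neg:
  fixes G :: "('i,'k::comm_ring_1) fpoly"
  shows "pmul (\<lambda>m. - G m) H m = - pmul G H m"
  by (simp add: pmul_def sum_negf)

lemma pmul_psc: "pmul (psc c G) H = psc c (pmul G H)"
  by (rule ext) (simp add: pmul_def psc_def sum_distrib_left mult.assoc)

fun pcomp :: "'i \<Rightarrow> ('i,'k::comm_ring_1) fpoly \<Rightarrow> nat \<Rightarrow> ('i,'k) fpoly \<Rightarrow> ('i,'k) fpoly" where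
  "pcomp i L 0 F = F"
| "pcomp i L (Suc n) F = padd (restr i F) (pmul L (pcomp i L n (der i F)))"

lemma comp_props:
  fixes F :: "('i,'k::comm_ring_1) fpoly"
  assumes L: "hom 1 L" shows "hom n F \<Longrightarrow> hom n (pcomp i L n F) \<and> (\<forall>v. vec v \<longrightarrow> peval (pcomp i L n F) v = peval F (v(i := peval L v)))"
proof (induction n arbitrary: F)
  case 0 thus ?case by (metis pcomp.simps(1) hom0_const vec_upd)
next
  case (Suc n)
  have hd: "hom n (der i F)" using hom_der[OF Suc.prems] .
  note IH = Suc.IH[OF hd]
  have hp: "hom (Suc n) (pmul L (pcomp i L n (der i F)))" using hom_pmul[OF L conjunct1[OF IH]] by simp
  show ?case
  proof (intro conjI allI impI)
    show "hom (Suc n) (pcomp i L (Suc n) F)" using hp Suc.prems by (simp add: hom_restr)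
    fix v :: "'i \<Rightarrow> 'k" assume v: "vec v"
    let ?t = "peval L v"
    have "peval (pcomp i L (Suc n) F) v = peval (restr i F) v + peval (pmul L (pcomp i L n (der i F))) v"
      using hp Suc.prems v by (simp add: peval_padd[where n = "Suc n"] hom_restr)
    also have "peval (pmul L (pcomp i L n (der i F))) v = ?t * peval (pcomp i L n (der i F)) v"
      using IH v by (simp add: peval_pmul[OF L conjunct1[OF IH]])
    also have "peval (pcomp i L n (der i F)) v = peval (der i F) (v(i := ?t))"
      using IH v by blast
    also have "peval (restr i F) v = peval (restr i F) (v(i := ?t))"
      using Suc.prems v by (intro restr_cong) auto
    also have "peval (restr i F) (v(i := ?t)) + ?t * peval (der i F) (v(i := ?t)) = peval F (v(i := ?t))"
      using peval_split[OF Suc.prems vec_upd[OF v], of i ?t i] by (simp only: fun_upd_same)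
    finally show "peval (pcomp i L (Suc n) F) v = peval F (v(i := ?t))" .
  qed
qed

lemma comp_strength:
  fixes F :: "('i,'k::comm_ring_1) fpoly"
  assumes L: "hom 1 L" and hF: "hom n F" and n: "2 \<le> n" and fs: "finite_strength n (pcomp i L n F)"
  shows "finite_strength n F"
proof -
  obtain m where nm: "n = Suc m" and m1: "1 \<le> m" using n by (cases n) auto
  let ?C = "pcomp i L m (der i F)"
  have hd: "hom m (der i F)" using hom_der[of m F i] hF nm by simp
  have hC: "hom m ?C" using comp_props[OF L hd] by blast
  have f1: "finite_strength n (padd (pcomp i L n F) (pmul (Xc i) (der i F)))"
    by (rule fs_add[OF fs, of 1 m]) (use m1 nm hd hom_Xc in auto)
  have "finite_strength n (padd (padd (pcomp i L n F) (pmul (Xc i) (der i F))) (pmul (psc (-1) L) ?C))"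
    by (rule fs_add[OF f1, of 1 m]) (use m1 nm hC L in auto)
  moreover have "padd (padd (pcomp i L n F) (pmul (Xc i) (der i F))) (pmul (psc (-1) L) ?C) = F"
  proof
    fix x
    have "F x = restr i F x + pmul (Xc i) (der i F) x" using split_poly[of i F] by (metis padd_def)
    thus "padd (padd (pcomp i L n F) (pmul (Xc i) (der i F))) (pmul (psc (-1) L) ?C) x = F x"
      by (simp add: nm padd_def psc_def pmul_neg)
  qed
  ultimately show ?thesis by simp
qed

definition good :: "(('i \<Rightarrow> 'k) \<Rightarrow> 'k) list \<Rightarrow> (('i \<Rightarrow> 'k) \<Rightarrow> ('i \<Rightarrow> 'k::comm_ring_1)) \<Rightarrow> bool" where
  "good \<Phi>s P \<longleftrightarrow> (\<forall>v. vec v \<longrightarrow> vec (P v)) \<and> (\<forall>u w. vec u \<longrightarrow> vec w \<longrightarrow> P (vadd u w) = vadd (P u) (P w))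
     \<and> (\<forall>c u. vec u \<longrightarrow> P (vsc c u) = vsc c (P u))
     \<and> (\<forall>v. vec v \<longrightarrow> (\<forall>\<phi>\<in>set \<Phi>s. \<phi> (P v) = 0))
     \<and> (\<forall>n F. 2 \<le> n \<longrightarrow> hom n F \<longrightarrow> infinite_strength n F \<longrightarrow>
          (\<exists>F'. hom n F' \<and> infinite_strength n F' \<and> (\<forall>v. vec v \<longrightarrow> peval F' v = peval F (P v))))"

lemma R_lemma:
  fixes \<Phi>s :: "(('i \<Rightarrow> 'k::field) \<Rightarrow> 'k) list"
  shows "\<forall>\<phi>\<in>set \<Phi>s. lin \<phi> \<Longrightarrow> \<exists>P. good \<Phi>s P"
proof (induction "length \<Phi>s" arbitrary: \<Phi>s)
  case 0
  hence "\<Phi>s = []" by simp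
  thus ?case by (intro exI[of _ id]) (auto simp: good_def)
next
  case (Suc k)
  then obtain \<phi> \<Phi>r where e: "\<Phi>s = \<phi> # \<Phi>r" by (cases \<Phi>s) auto
  have l\<phi>: "lin \<phi>" and lr: "\<forall>\<phi>\<in>set \<Phi>r. lin \<phi>" using Suc.prems e by auto
  show ?case
  proof (cases "\<forall>i. \<phi> (uv i) = 0")
    case True
    obtain P where P: "good \<Phi>r P" using Suc.hyps(1)[of \<Phi>r] Suc.hyps(2) e lr by auto
    have "good \<Phi>s P" using P True l\<phi> lin_eq_zero[OF l\<phi> True] unfolding good_def e by auto
    thus ?thesis by blast
  next
    case False
    then obtain i0 where c0: "\<phi> (uv i0) \<noteq> 0" by blast
    define c where "c = \<phi> (uv i0)"
    define \<psi> where "\<psi> = (\<lambda>v. v i0 - \<phi> v / c)"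
    define P1 where "P1 = (\<lambda>v::'i\<Rightarrow>'k. v(i0 := \<psi> v))"
    have l\<psi>: "lin \<psi>" using l\<phi> unfolding lin_def \<psi>_def
      by (auto simp: vadd_def vsc_def add_divide_distrib right_diff_distrib)
    have P1e: "P1 v = vadd v (vsc (- (\<phi> v / c)) (uv i0))" for v
      by (rule ext) (auto simp: P1_def \<psi>_def vadd_def vsc_def uv_def)
    have P1add: "P1 (vadd u w) = vadd (P1 u) (P1 w)" if "vec u" "vec w" for u w
      using l\<psi> that by (auto simp: P1_def lin_def vadd_def)
    have P1sc: "P1 (vsc a u) = vsc a (P1 u)" if "vec u" for a u
      using l\<psi> that by (auto simp: P1_def lin_def vsc_def)
    have P1vec: "vec v \<Longrightarrow> vec (P1 v)" for v by (simp add: P1_def)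
    have P1\<phi>: "\<phi> (P1 v) = 0" if "vec v" for v
    proof -
      have "\<phi> (P1 v) = \<phi> v + (- (\<phi> v / c)) * c"
        using l\<phi> that by (simp add: P1e lin_def c_def)
      thus ?thesis using c0 by (simp add: c_def)
    qed
    have lcomp: "lin (\<lambda>v. \<phi>' (P1 v))" if "lin \<phi>'" for \<phi>'
      using that P1add P1sc P1vec unfolding lin_def by auto
    define \<Phi>r' where "\<Phi>r' = map (\<lambda>\<phi>'. (\<lambda>v. \<phi>' (P1 v))) \<Phi>r"
    obtain P2 where P2: "good \<Phi>r' P2"
      using Suc.hyps(1)[of \<Phi>r'] Suc.hyps(2) e lr lcomp by (auto simp: \<Phi>r'_def)
    have "good \<Phi>s (\<lambda>v. P1 (P2 v))"
      unfolding good_def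
    proof (intro conjI allI impI)
      fix v :: "'i \<Rightarrow> 'k" assume v: "vec v"
      show "vec (P1 (P2 v))" using P2 v P1vec by (simp add: good_def)
      show "\<forall>\<phi>'\<in>set \<Phi>s. \<phi>' (P1 (P2 v)) = 0"
        using P2 v P1\<phi> unfolding good_def e \<Phi>r'_def by auto
    next
      fix u w :: "'i \<Rightarrow> 'k" assume "vec u" "vec w"
      thus "P1 (P2 (vadd u w)) = vadd (P1 (P2 u)) (P1 (P2 w))" using P2 P1add by (simp add: good_def)
    next
      fix a and u :: "'i \<Rightarrow> 'k" assume "vec u"
      thus "P1 (P2 (vsc a u)) = vsc a (P1 (P2 u))" using P2 P1sc by (simp add: good_def)
    next
      fix n and F :: "('i,'k) fpoly" assume n: "2 \<le> n" and hF: "hom n F" and iF: "infinite_strength n F"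
      let ?F1 = "pcomp i0 (lf \<psi>) n F"
      have c1: "hom n ?F1 \<and> (\<forall>v. vec v \<longrightarrow> peval ?F1 v = peval F (v(i0 := peval (lf \<psi>) v)))"
        using comp_props[OF hom_lf hF] .
      have i1: "infinite_strength n ?F1"
        using comp_strength[OF hom_lf hF n] iF by (auto simp: infinite_strength_def)
      obtain F2 where F2: "hom n F2" "infinite_strength n F2" "\<forall>v. vec v \<longrightarrow> peval F2 v = peval ?F1 (P2 v)"
        using P2 n c1 i1 unfolding good_def by blast
      show "\<exists>F'. hom n F' \<and> infinite_strength n F' \<and> (\<forall>v. vec v \<longrightarrow> peval F' v = peval F (P1 (P2 v)))"
      proof (intro exI conjI allI impI)
        fix v :: "'i \<Rightarrow> 'k" assume v: "vec v"
        have "vec (P2 v)" using P2 v by (simp add: good_def)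
        thus "peval F2 v = peval F (P1 (P2 v))"
          using F2 c1 v l\<psi> by (simp add: peval_lf P1_def)
      qed (use F2 in auto)
    qed
    thus ?thesis by blast
  qed
qed

definition KK :: "(('i \<Rightarrow> 'k) \<Rightarrow> 'k) set \<Rightarrow> ('i \<Rightarrow> 'k::comm_ring_1) \<Rightarrow> bool" where
  "KK \<Phi> v \<longleftrightarrow> vec v \<and> (\<forall>\<phi>\<in>\<Phi>. \<phi> v = 0)"
definition LC :: "(('i \<Rightarrow> 'k::comm_ring_1) \<Rightarrow> 'k) set \<Rightarrow> bool" where
  "LC \<Phi> \<longleftrightarrow> finite \<Phi> \<and> (\<forall>\<phi>\<in>\<Phi>. lin \<phi>)"


lemma R_set:
  fixes \<Phi> :: "(('i \<Rightarrow> 'k::field) \<Rightarrow> 'k) set"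
  assumes "LC \<Phi>" shows "\<exists>P :: ('i \<Rightarrow> 'k) \<Rightarrow> ('i \<Rightarrow> 'k). (\<forall>v. vec v \<longrightarrow> KK \<Phi> (P v)) \<and> (\<forall>u w. vec u \<longrightarrow> vec w \<longrightarrow> P (vadd u w) = vadd (P u) (P w))
     \<and> (\<forall>c u. vec u \<longrightarrow> P (vsc c u) = vsc c (P u))
     \<and> (\<forall>n F. 2 \<le> n \<longrightarrow> hom n F \<longrightarrow> infinite_strength n F \<longrightarrow>
          (\<exists>F'. hom n F' \<and> infinite_strength n F' \<and> (\<forall>v. vec v \<longrightarrow> peval F' v = peval F (P v))))"
proof -
  obtain \<Phi>s where e: "set \<Phi>s = \<Phi>" using assms finite_list by (auto simp: LC_def)
  obtain P where g: "good \<Phi>s P" using R_lemma[of \<Phi>s] assms e by (auto simp: LC_def)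
  have "(\<forall>v. vec v \<longrightarrow> KK \<Phi> (P v)) \<and> (\<forall>u w. vec u \<longrightarrow> vec w \<longrightarrow> P (vadd u w) = vadd (P u) (P w))
     \<and> (\<forall>c u. vec u \<longrightarrow> P (vsc c u) = vsc c (P u))
     \<and> (\<forall>n F. 2 \<le> n \<longrightarrow> hom n F \<longrightarrow> infinite_strength n F \<longrightarrow>
          (\<exists>F'. hom n F' \<and> infinite_strength n F' \<and> (\<forall>v. vec v \<longrightarrow> peval F' v = peval F (P v))))"
    using g e unfolding good_def KK_def by auto
  thus ?thesis by blast
qed

lemma I1:
  fixes F :: "('i,'k::alg_closed_field) fpoly"
  assumes "LC \<Phi>" "2 \<le> n" "hom n F" "infinite_strength n F"
  shows "\<exists>v. KK \<Phi> v \<and> peval F v \<noteq> 0"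
proof -
  obtain P :: "('i \<Rightarrow> 'k) \<Rightarrow> ('i \<Rightarrow> 'k)" where P: "\<forall>v. vec v \<longrightarrow> KK \<Phi> (P v)"
    "\<forall>n F. 2 \<le> n \<longrightarrow> hom n F \<longrightarrow> infinite_strength n F \<longrightarrow>
          (\<exists>F'. hom n F' \<and> infinite_strength n F' \<and> (\<forall>v. vec v \<longrightarrow> peval F' v = peval F (P v)))"
    using R_set[OF assms(1)] by blast
  then obtain F' where F': "hom n F'" "infinite_strength n F'" "\<forall>v. vec v \<longrightarrow> peval F' v = peval F (P v)"
    using assms by blast
  have "\<exists>v. vec v \<and> peval F' v \<noteq> 0"
    using IDENT[OF F'(1)] inf_nonzero[OF F'(2)] by blast
  then obtain v where "vec v" "peval F' v \<noteq> 0" by blast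
  thus ?thesis using P F' by metis
qed


definition Bq :: "('i,'k::comm_ring_1) fpoly \<Rightarrow> ('i\<Rightarrow>'k) \<Rightarrow> ('i\<Rightarrow>'k) \<Rightarrow> 'k" where
  "Bq Q u v = peval Q (vadd u v) - peval Q u - peval Q v"

lemma vadd_comm: "vadd u v = vadd v u" by (simp add: vadd_def add.commute)
lemma Bq_sym: "Bq Q u v = Bq Q v u" by (simp add: Bq_def vadd_comm)

lemma size2: "size m = 2 \<Longrightarrow> \<exists>i j. m = {#i, j#}"
proof -
  assume "size m = 2"
  then obtain a N where "m = add_mset a N" "size N = 1"
    using size_eq_Suc_imp_eq_union[of m 1] by auto
  moreover then obtain b where "N = {#b#}" using size_1_singleton_mset by blast
  ultimately show ?thesis by blast
qed

definition b2 :: "'i multiset \<Rightarrow> ('i\<Rightarrow>'k::comm_ring_1) \<Rightarrow> ('i\<Rightarrow>'k) \<Rightarrow> 'k" where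
  "b2 m u v = pv m (vadd u v) - pv m u - pv m v"

lemma b2_lin:
  assumes "size m = 2"
  shows "b2 m u (vadd v w) = b2 m u v + b2 m u w" "b2 m u (vsc c v) = c * b2 m u v"
proof -
  obtain i j where m: "m = {#i, j#}" using size2[OF assms] by blast
  show "b2 m u (vadd v w) = b2 m u v + b2 m u w"
    by (simp add: m b2_def pv_def vadd_def algebra_simps)
  show "b2 m u (vsc c v) = c * b2 m u v"
    by (simp add: m b2_def pv_def vadd_def vsc_def algebra_simps)
qed

lemma Bq_sum:
  fixes Q :: "('i,'k::comm_ring_1) fpoly"
  assumes "hom 2 Q" "finite S" "supp u \<subseteq> S" "supp v \<subseteq> S"
  shows "Bq Q u v = (\<Sum>m\<in>multisets_of_size S 2. Q m * b2 m u v)"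
proof -
  have s: "supp (vadd u v) \<subseteq> S" using supp_vadd[of u v] assms by auto
  show ?thesis unfolding Bq_def
    using peval_eq[OF assms(1,2) s] peval_eq[OF assms(1,2,3)] peval_eq[OF assms(1,2,4)]
    by (simp add: b2_def sum_subtractf right_diff_distrib)
qed

lemma lin_Bq:
  fixes Q :: "('i,'k::comm_ring_1) fpoly"
  assumes h: "hom 2 Q" and u: "vec u" shows "lin (Bq Q u)"
  unfolding lin_def
proof (intro conjI allI impI)
  fix v w :: "'i \<Rightarrow> 'k" assume v: "vec v" and w: "vec w"
  let ?S = "supp u \<union> supp v \<union> supp w"
  have f: "finite ?S" using u v w by (simp add: vec_supp)
  have ss: "supp u \<subseteq> ?S" "supp v \<subseteq> ?S" "supp w \<subseteq> ?S" by auto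
  have "Bq Q u (vadd v w) = (\<Sum>m\<in>multisets_of_size ?S 2. Q m * b2 m u (vadd v w))"
    using h f supp_vadd[of v w] by (intro Bq_sum) auto
  also have "\<dots> = (\<Sum>m\<in>multisets_of_size ?S 2. Q m * b2 m u v) + (\<Sum>m\<in>multisets_of_size ?S 2. Q m * b2 m u w)"
    by (simp add: sum.distrib[symmetric] distrib_left b2_lin multisets_of_size_def)
  also have "\<dots> = Bq Q u v + Bq Q u w"
    using Bq_sum[OF h f ss(1) ss(2)] Bq_sum[OF h f ss(1) ss(3)] by simp
  finally show "Bq Q u (vadd v w) = Bq Q u v + Bq Q u w" .
next
  fix c and v :: "'i \<Rightarrow> 'k" assume v: "vec v"
  let ?S = "supp u \<union> supp v"
  have f: "finite ?S" using u v by (simp add: vec_supp)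
  have ss: "supp u \<subseteq> ?S" "supp v \<subseteq> ?S" by auto
  have "Bq Q u (vsc c v) = (\<Sum>m\<in>multisets_of_size ?S 2. Q m * b2 m u (vsc c v))"
    using h f supp_vsc[of c v] by (intro Bq_sum) auto
  also have "\<dots> = c * (\<Sum>m\<in>multisets_of_size ?S 2. Q m * b2 m u v)"
    by (simp add: sum_distrib_left b2_lin multisets_of_size_def algebra_simps)
  also have "\<dots> = c * Bq Q u v"
    using Bq_sum[OF h f ss(1) ss(2)] by simp
  finally show "Bq Q u (vsc c v) = c * Bq Q u v" .
qed

lemma Bq_add2: "hom 2 Q \<Longrightarrow> vec u \<Longrightarrow> vec v \<Longrightarrow> vec w \<Longrightarrow> Bq Q u (vadd v w) = Bq Q u v + Bq Q u w"
  using lin_Bq[of Q u] unfolding lin_def by blast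
lemma Bq_sc2: "hom 2 Q \<Longrightarrow> vec u \<Longrightarrow> vec v \<Longrightarrow> Bq Q u (vsc c v) = c * Bq Q u v"
  using lin_Bq[of Q u] unfolding lin_def by blast
lemma Bq_sc1: "hom 2 Q \<Longrightarrow> vec u \<Longrightarrow> vec v \<Longrightarrow> Bq Q (vsc c u) v = c * Bq Q u v"
  using Bq_sc2 Bq_sym by metis
lemma Bq_vsum2: "hom 2 Q \<Longrightarrow> vec u \<Longrightarrow> finite L \<Longrightarrow> (\<And>l. l \<in> L \<Longrightarrow> vec (X l)) \<Longrightarrow> Bq Q u (vsum L X) = (\<Sum>l\<in>L. Bq Q u (X l))"
  using lin_vsum[OF lin_Bq] by blast
lemma Q_add: "peval Q (vadd u v) = peval Q u + peval Q v + Bq Q u v" by (simp add: Bq_def)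
lemma Q_sc: "hom 2 Q \<Longrightarrow> vec u \<Longrightarrow> peval Q (vsc c u) = c^2 * peval Q u" by (rule peval_vsc)

lemma peval_zero:
  fixes Q :: "('i,'k::comm_ring_1) fpoly"
  assumes "hom (Suc n) Q" shows "peval Q (\<lambda>_. 0) = 0"
proof -
  have "peval Q (\<lambda>_. 0) = peval Q (vsc 0 (\<lambda>_. 0))" by (simp add: vsc_def)
  also have "\<dots> = 0 ^ Suc n * peval Q (\<lambda>_. 0)" by (rule peval_vsc[OF assms vec_zero])
  finally show ?thesis by simp
qed

lemma ORTHSUM:
  fixes Q :: "('i,'k::comm_ring_1) fpoly"
  assumes h: "hom 2 Q"
  shows "finite L \<Longrightarrow> (\<forall>l\<in>L. vec (X l)) \<Longrightarrow> (\<forall>l\<in>L. \<forall>l'\<in>L. l \<noteq> l' \<longrightarrow> Bq Q (X l) (X l') = 0)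
     \<Longrightarrow> peval Q (vsum L X) = (\<Sum>l\<in>L. peval Q (X l))"
proof (induction L rule: finite_induct)
  case empty thus ?case using peval_zero[of 1 Q] h by (simp add: numeral_2_eq_2)
next
  case (insert l L)
  have "Bq Q (X l) (vsum L X) = (\<Sum>l'\<in>L. Bq Q (X l) (X l'))"
    using insert h by (intro Bq_vsum2) auto
  also have "\<dots> = 0" using insert by (intro sum.neutral) auto
  finally have "Bq Q (X l) (vsum L X) = 0" .
  thus ?case using insert by (simp add: vsum_insert Q_add)
qed

lemma sqrt_ex: "\<exists>y. y^2 = (x::'k::alg_closed_field)"
  using nth_root_exists[of 2 x] by simp

definition ICS :: "nat set \<Rightarrow> (nat \<Rightarrow> ('i,'k::comm_ring_1) fpoly) \<Rightarrow> bool" where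
  "ICS I q \<longleftrightarrow> (\<forall>c. (\<exists>j\<in>I. c j \<noteq> 0) \<longrightarrow> infinite_strength 2 (\<lambda>m. \<Sum>j\<in>I. c j * q j m))"

lemma ICS_subset:
  fixes q :: "nat \<Rightarrow> ('i,'k::comm_ring_1) fpoly"
  assumes "ICS I q" "J \<subseteq> I" "finite I" shows "ICS J q"
  unfolding ICS_def
proof (intro allI impI)
  fix c :: "nat \<Rightarrow> 'k" assume c: "\<exists>j\<in>J. c j \<noteq> 0"
  define c' where "c' = (\<lambda>j. if j \<in> J then c j else 0)"
  have "(\<lambda>m. \<Sum>j\<in>I. c' j * q j m) = (\<lambda>m. \<Sum>j\<in>J. c j * q j m)"
  proof
    fix m
    have "(\<Sum>j\<in>I. c' j * q j m) = (\<Sum>j\<in>J. c' j * q j m)"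
      using assms by (intro sum.mono_neutral_right) (auto simp: c'_def)
    thus "(\<Sum>j\<in>I. c' j * q j m) = (\<Sum>j\<in>J. c j * q j m)" by (simp add: c'_def)
  qed
  moreover have "\<exists>j\<in>I. c' j \<noteq> 0" using c assms by (auto simp: c'_def)
  ultimately show "infinite_strength 2 (\<lambda>m. \<Sum>j\<in>J. c j * q j m)" using assms(1) unfolding ICS_def by metis
qed

lemma KK_mono: "KK \<Psi> v \<Longrightarrow> \<Phi> \<subseteq> \<Psi> \<Longrightarrow> KK \<Phi> v" by (auto simp: KK_def)

lemma SEQ:
  fixes q :: "nat \<Rightarrow> ('i,'k::comm_ring_1) fpoly" and \<Phi> :: "(('i \<Rightarrow> 'k) \<Rightarrow> 'k) set"
  assumes G: "finite G" "\<forall>i\<in>G. hom 2 (q i)" and \<Phi>: "LC \<Phi>"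
    and ex: "\<And>l \<Psi>. l \<in> L \<Longrightarrow> LC \<Psi> \<Longrightarrow> \<Phi> \<subseteq> \<Psi> \<Longrightarrow> \<exists>x::nat \<Rightarrow> ('i\<Rightarrow>'k). (\<forall>j<N. KK \<Psi> (x j)) \<and> P l x"
  shows "finite L' \<Longrightarrow> L' \<subseteq> L \<Longrightarrow> \<exists>X::nat \<Rightarrow> nat \<Rightarrow> ('i\<Rightarrow>'k). \<forall>l\<in>L'. (\<forall>j<N. KK \<Phi> (X l j)) \<and> P l (X l) \<and>
     (\<forall>l'\<in>L'. l' \<noteq> l \<longrightarrow> (\<forall>i\<in>G. \<forall>j<N. \<forall>j'<N. Bq (q i) (X l j) (X l' j') = 0))"
proof (induction L' rule: finite_induct)
  case empty thus ?case by simp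
next
  case (insert l M)
  have HML: "M \<subseteq> L" "l \<in> L" using insert.prems by auto
  obtain X :: "nat \<Rightarrow> nat \<Rightarrow> ('i\<Rightarrow>'k)" where X: "\<forall>l\<in>M. (\<forall>j<N. KK \<Phi> (X l j)) \<and> P l (X l) \<and>
     (\<forall>l'\<in>M. l' \<noteq> l \<longrightarrow> (\<forall>i\<in>G. \<forall>j<N. \<forall>j'<N. Bq (q i) (X l j) (X l' j') = 0))"
    using insert.IH[OF HML(1)] by (elim exE) (rule that)
  define \<Psi> where "\<Psi> = \<Phi> \<union> (\<lambda>(i,l',j'). Bq (q i) (X l' j')) ` (G \<times> M \<times> {..<N})"
  have fin: "finite \<Psi>" using \<Phi> G insert.hyps(1) by (simp add: \<Psi>_def LC_def)
  have lins: "\<forall>\<phi>\<in>\<Psi>. lin \<phi>"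
  proof
    fix \<phi> assume "\<phi> \<in> \<Psi>"
    hence "\<phi> \<in> \<Phi> \<or> (\<exists>i l' j'. i \<in> G \<and> l' \<in> M \<and> j' < N \<and> \<phi> = Bq (q i) (X l' j'))"
      unfolding \<Psi>_def by auto
    thus "lin \<phi>"
    proof
      assume "\<phi> \<in> \<Phi>" thus ?thesis using \<Phi> by (simp add: LC_def)
    next
      assume "\<exists>i l' j'. i \<in> G \<and> l' \<in> M \<and> j' < N \<and> \<phi> = Bq (q i) (X l' j')"
      then obtain i l' j' where "i \<in> G" "l' \<in> M" "j' < N" "\<phi> = Bq (q i) (X l' j')" by blast
      moreover have "vec (X l' j')" using X \<open>l' \<in> M\<close> \<open>j' < N\<close> by (simp add: KK_def)
      ultimately show ?thesis using G(2) lin_Bq[of "q i" "X l' j'"] by simp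
    qed
  qed
  have "LC \<Psi>" using fin lins by (simp add: LC_def)
  moreover have "\<Phi> \<subseteq> \<Psi>" by (simp add: \<Psi>_def)
  ultimately obtain x where x: "\<forall>j<N. KK \<Psi> (x j)" "P l x"
    using ex[OF HML(2)] by blast
  have xo: "Bq (q i) (X l' j') (x j) = 0" if "i \<in> G" "l' \<in> M" "j' < N" "j < N" for i l' j j'
  proof -
    have "KK \<Psi> (x j)" using x(1) \<open>j < N\<close> by simp
    moreover have "Bq (q i) (X l' j') \<in> \<Psi>" using that unfolding \<Psi>_def by force
    ultimately show ?thesis by (simp add: KK_def)
  qed
  have xK: "KK \<Phi> (x j)" if "j < N" for j using x(1) that KK_mono[of \<Psi> "x j" \<Phi>] by (simp add: \<Psi>_def)
  show ?case
  proof (rule exI[where x="X(l := x)"], rule ballI, intro conjI)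
    fix l1 assume l1: "l1 \<in> insert l M"
    show "\<forall>j<N. KK \<Phi> ((X(l := x)) l1 j)" using l1 X xK by auto
    show "P l1 ((X(l := x)) l1)" using l1 X x(2) by auto
    show "\<forall>l2\<in>insert l M. l2 \<noteq> l1 \<longrightarrow> (\<forall>i\<in>G. \<forall>j<N. \<forall>j'<N. Bq (q i) ((X(l := x)) l1 j) ((X(l := x)) l2 j') = 0)"
    proof (intro ballI impI allI)
    fix l2 i j j' assume l2: "l2 \<in> insert l M" "l2 \<noteq> l1" and i: "i \<in> G" and j: "j < N" "j' < N"
    show "Bq (q i) ((X(l := x)) l1 j) ((X(l := x)) l2 j') = 0"
    proof (cases "l1 = l")
      case True
      hence "l2 \<in> M" "l2 \<noteq> l" using l2 by auto
      thus ?thesis using True xo[OF i \<open>l2 \<in> M\<close> j(2) j(1)] Bq_sym[of "q i" "x j" "X l2 j'"] by (simp add: fun_upd_def)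
    next
      case False
      hence l1M: "l1 \<in> M" using l1 by auto
      show ?thesis
      proof (cases "l2 = l")
        case True thus ?thesis using False xo[OF i l1M j(1) j(2)] by simp
      next
        case False2: False
        hence "l2 \<in> M" using l2 by auto
        thus ?thesis using False False2 X l1M l2 i j by simp
      qed
    qed
    qed
  qed
qed


lemma ThmQ:
  fixes q :: "nat \<Rightarrow> ('i,'k::alg_closed_field) fpoly"
  shows "finite I \<Longrightarrow> ICS I q \<Longrightarrow> \<forall>i\<in>I. hom 2 (q i) \<Longrightarrow> LC \<Phi> \<Longrightarrow> \<exists>v. KK \<Phi> v \<and> (\<forall>i\<in>I. peval (q i) v = b i)"
proof (induction I arbitrary: \<Phi> b rule: finite_induct)
  case empty
  show ?case by (rule exI[where x="\<lambda>_. 0"]) (use empty.prems in \<open>auto simp: KK_def LC_def lin_zero\<close>)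
next
  case (insert k J)
  let ?I = "insert k J"
  have ICSJ: "ICS J q" using insert ICS_subset[of ?I q J] by auto
  have hq: "\<forall>i\<in>?I. hom 2 (q i)" using insert.prems by simp
  have hqi: "hom 2 (q i)" if "i \<in> ?I" for i using hq that by blast
  have IH: "\<exists>v. KK \<Psi> v \<and> (\<forall>i\<in>J. peval (q i) v = c i)" if "LC \<Psi>" for \<Psi> c
    using insert.IH ICSJ hq that by auto
  define P where "P = (\<lambda>l (x::nat \<Rightarrow> 'i \<Rightarrow> 'k). \<forall>i\<in>J. peval (q i) (x 0) = (if i = l then 1 else 0))"
  have "\<exists>X::nat \<Rightarrow> nat \<Rightarrow> ('i\<Rightarrow>'k). \<forall>l\<in>J. (\<forall>j<1. KK \<Phi> (X l j)) \<and> P l (X l) \<and>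
     (\<forall>l'\<in>J. l' \<noteq> l \<longrightarrow> (\<forall>i\<in>?I. \<forall>j<1. \<forall>j'<1. Bq (q i) (X l j) (X l' j') = 0))"
  proof (rule SEQ[where L=J])
    show "finite ?I" using insert by simp
    show "\<forall>i\<in>?I. hom 2 (q i)" by (rule hq)
    show "LC \<Phi>" by (rule insert.prems)
    show "finite J" by (rule insert.hyps)
    show "J \<subseteq> J" by simp
    fix l \<Psi> assume "l \<in> J" "LC \<Psi>" "\<Phi> \<subseteq> \<Psi>"
    then obtain v where "KK \<Psi> v" "\<forall>i\<in>J. peval (q i) v = (if i = l then 1 else 0)"
      using IH[OF \<open>LC \<Psi>\<close>, of "\<lambda>i. if i = l then 1 else 0"] by blast
    thus "\<exists>x. (\<forall>j<1. KK \<Psi> (x j)) \<and> P l x" by (intro exI[where x="\<lambda>_. v"]) (simp add: P_def)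
  qed
  then obtain X :: "nat \<Rightarrow> nat \<Rightarrow> ('i\<Rightarrow>'k)" where X: "\<forall>l\<in>J. (\<forall>j<1. KK \<Phi> (X l j)) \<and> P l (X l) \<and>
     (\<forall>l'\<in>J. l' \<noteq> l \<longrightarrow> (\<forall>i\<in>?I. \<forall>j<1. \<forall>j'<1. Bq (q i) (X l j) (X l' j') = 0))" by blast
  define u where "u = (\<lambda>l. X l 0)"
  have uK: "KK \<Phi> (u l)" if "l \<in> J" for l using X that by (simp add: u_def)
  have uv: "vec (u l)" if "l \<in> J" for l using uK[OF that] by (simp add: KK_def)
  have uq: "peval (q i) (u l) = (if i = l then 1 else 0)" if "l \<in> J" "i \<in> J" for i l
    using X that by (simp add: u_def P_def)
  have uo: "Bq (q i) (u l) (u l') = 0" if "l \<in> J" "l' \<in> J" "l \<noteq> l'" "i \<in> ?I" for i l l'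
    using X that by (auto simp: u_def)
  have LCP: "LC \<Phi>" by (rule insert.prems)
  define \<Phi>1 where "\<Phi>1 = \<Phi> \<union> (\<lambda>(i,l). Bq (q i) (u l)) ` (?I \<times> J)"
  have LC1: "LC \<Phi>1"
    unfolding LC_def
  proof
    show "finite \<Phi>1" using LCP insert.hyps by (simp add: \<Phi>1_def LC_def)
    show "\<forall>\<phi>\<in>\<Phi>1. lin \<phi>" using LCP hq uv lin_Bq by (auto simp: \<Phi>1_def LC_def)
  qed
  define c where "c = (\<lambda>j. if j = k then 1 else - peval (q k) (u j))"
  define Q where "Q = (\<lambda>m. \<Sum>j\<in>?I. c j * q j m)"
  have iQ: "infinite_strength 2 Q" using insert.prems(1) unfolding ICS_def Q_def
    by (metis c_def insertI1 one_neq_zero)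
  have hQ: "hom 2 Q" unfolding Q_def using peval_comb[where I="?I" and q=q and n=2 and v="\<lambda>_. 0" and c=c] insert.hyps hq by simp
  obtain w where w: "KK \<Phi>1 w" "peval Q w \<noteq> 0" using I1[OF LC1 _ hQ iQ] by auto
  have wv: "vec w" using w by (simp add: KK_def)
  have wo: "Bq (q i) w (u l) = 0" if "i \<in> ?I" "l \<in> J" for i l
  proof -
    have "Bq (q i) (u l) \<in> \<Phi>1" using that by (force simp: \<Phi>1_def)
    hence "Bq (q i) (u l) w = 0" using w by (simp add: KK_def)
    thus ?thesis by (simp add: Bq_sym)
  qed
  define t where "t = (\<lambda>l. SOME y. y^2 = - peval (q l) w)"
  have t2: "(t l)^2 = - peval (q l) w" for l unfolding t_def by (rule someI_ex[OF sqrt_ex])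
  define Y where "Y = (\<lambda>l. vsc (t l) (u l))"
  have Yv: "vec (Y l)" if "l \<in> J" for l using uv[OF that] by (simp add: Y_def)
  define S where "S = vsum J Y"
  have Sv: "vec S" using Yv insert.hyps by (simp add: S_def)
  define g where "g = vadd w S"
  have gv: "vec g" using Sv wv by (simp add: g_def)
  have qS: "peval (q i) S = (\<Sum>l\<in>J. (t l)^2 * peval (q i) (u l))" if "i \<in> ?I" for i
  proof -
    have "peval (q i) S = (\<Sum>l\<in>J. peval (q i) (Y l))"
      unfolding S_def
    proof (rule ORTHSUM)
      show "hom 2 (q i)" using hqi[OF that] that by blast
      show "finite J" by (rule insert.hyps)
      show "\<forall>l\<in>J. vec (Y l)" using Yv by simp
      show "\<forall>l\<in>J. \<forall>l'\<in>J. l \<noteq> l' \<longrightarrow> Bq (q i) (Y l) (Y l') = 0"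
        using hqi[OF that] that uv uo by (auto simp: Y_def Bq_sc1 Bq_sc2)
    qed
    also have "\<dots> = (\<Sum>l\<in>J. (t l)^2 * peval (q i) (u l))"
      using hqi[OF that] that uv by (intro sum.cong refl) (simp add: Y_def Q_sc)
    finally show ?thesis .
  qed
  have BwS: "Bq (q i) w S = 0" if "i \<in> ?I" for i
  proof -
    have "Bq (q i) w S = (\<Sum>l\<in>J. Bq (q i) w (Y l))"
      unfolding S_def using hqi[OF that] that wv Yv insert.hyps by (intro Bq_vsum2) auto
    also have "\<dots> = 0" using hqi[OF that] that wv uv wo by (intro sum.neutral) (simp add: Y_def Bq_sc2)
    finally show ?thesis .
  qed
  have qg: "peval (q i) g = peval (q i) w + (\<Sum>l\<in>J. (t l)^2 * peval (q i) (u l))" if "i \<in> ?I" for i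
    using that qS BwS by (simp add: g_def Q_add)
  have qgJ: "peval (q i) g = 0" if "i \<in> J" for i
  proof -
    have "(\<Sum>l\<in>J. (t l)^2 * peval (q i) (u l)) = (\<Sum>l\<in>J. if l = i then (t l)^2 else 0)"
      using that uq by (intro sum.cong refl) auto
    also have "\<dots> = (t i)^2" using that insert.hyps by simp
    finally show ?thesis using qg[of i] that t2[of i] by simp
  qed
  have qgk: "peval (q k) g = peval Q w"
  proof -
    have "peval Q w = (\<Sum>j\<in>?I. c j * peval (q j) w)"
      unfolding Q_def using peval_comb[where I="?I" and q=q and n=2 and v=w and c=c] insert.hyps hq wv by simp
    also have "\<dots> = peval (q k) w + (\<Sum>j\<in>J. - peval (q k) (u j) * peval (q j) w)"
      using insert.hyps by (simp add: c_def) (intro sum.cong refl, auto simp: c_def)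
    also have "(\<Sum>j\<in>J. - peval (q k) (u j) * peval (q j) w) = (\<Sum>l\<in>J. (t l)^2 * peval (q k) (u l))"
      by (intro sum.cong refl) (simp add: t2)
    finally show ?thesis using qg[of k] by simp
  qed
  have gK: "KK \<Phi> g"
  proof -
    have "\<phi> g = 0" if "\<phi> \<in> \<Phi>" for \<phi>
    proof -
      have l: "lin \<phi>" using LCP that by (simp add: LC_def)
      have "\<phi> g = \<phi> w + (\<Sum>l\<in>J. \<phi> (Y l))"
        using l wv Sv Yv insert.hyps by (simp add: g_def S_def lin_def lin_vsum)
      also have "\<dots> = 0"
      proof -
        have "\<phi> w = 0" using w(1) that by (simp add: KK_def \<Phi>1_def)
        moreover have "\<phi> (Y l) = 0" if "l \<in> J" for l
          using uK[OF that] \<open>\<phi> \<in> \<Phi>\<close> l uv[OF that] by (simp add: Y_def lin_def KK_def)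
        ultimately show ?thesis by simp
      qed
      finally show ?thesis .
    qed
    thus ?thesis using gv by (simp add: KK_def)
  qed
  define \<Phi>2 where "\<Phi>2 = \<Phi> \<union> (\<lambda>i. Bq (q i) g) ` ?I"
  have LC2: "LC \<Phi>2"
    unfolding LC_def
  proof
    show "finite \<Phi>2" using LCP insert.hyps by (simp add: \<Phi>2_def LC_def)
    show "\<forall>\<phi>\<in>\<Phi>2. lin \<phi>" using LCP hq gv lin_Bq by (auto simp: \<Phi>2_def LC_def)
  qed
  obtain v' where v': "KK \<Phi>2 v'" "\<forall>i\<in>J. peval (q i) v' = b i" using IH[OF LC2] by blast
  have v'v: "vec v'" using v' by (simp add: KK_def)
  have gv': "Bq (q i) v' g = 0" if "i \<in> ?I" for i
  proof -
    have "Bq (q i) g \<in> \<Phi>2" using that unfolding \<Phi>2_def by blast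
    hence "Bq (q i) g v' = 0" using v' by (simp add: KK_def)
    thus ?thesis by (simp add: Bq_sym)
  qed
  define s where "s = (SOME y. y^2 = (b k - peval (q k) v') / peval (q k) g)"
  have s2: "s^2 = (b k - peval (q k) v') / peval (q k) g" unfolding s_def by (rule someI_ex[OF sqrt_ex])
  define v where "v = vadd v' (vsc s g)"
  have qv: "peval (q i) v = peval (q i) v' + s^2 * peval (q i) g" if "i \<in> ?I" for i
  proof -
    have "Bq (q i) v' (vsc s g) = s * Bq (q i) v' g" using hqi[OF that] that v'v gv by (simp add: Bq_sc2)
    thus ?thesis using hqi[OF that] that gv gv'[OF that] by (simp add: v_def Q_add Q_sc)
  qed
  show ?case
  proof (intro exI conjI)
    show "KK \<Phi> v" unfolding KK_def
    proof (intro conjI ballI)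
      show "vec v" using v'v gv by (simp add: v_def)
      fix \<phi> assume p: "\<phi> \<in> \<Phi>"
      have l: "lin \<phi>" using LCP p by (simp add: LC_def)
      have "\<phi> v' = 0" using v'(1) p by (simp add: KK_def \<Phi>2_def)
      moreover have "\<phi> g = 0" using gK p by (simp add: KK_def)
      ultimately show "\<phi> v = 0" using l v'v gv by (simp add: v_def lin_def)
    qed
    show "\<forall>i\<in>?I. peval (q i) v = b i"
    proof
      fix i assume i: "i \<in> ?I"
      show "peval (q i) v = b i"
      proof (cases "i = k")
        case True
        have "peval (q k) g \<noteq> 0" using qgk w by simp
        thus ?thesis using True qv[OF i] s2 by simp
      next
        case False
        hence "i \<in> J" using i by simp
        thus ?thesis using qv[OF i] qgJ v' by simp
      qed
    qed
  qed
qed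


lemma size3: "size m = 3 \<Longrightarrow> \<exists>i j l. m = {#i, j, l#}"
proof -
  assume "size m = 3"
  then obtain a N where "m = add_mset a N" "size N = 2"
    using size_eq_Suc_imp_eq_union[of m 2] by (auto simp: numeral_3_eq_3 numeral_2_eq_2)
  moreover then obtain b c where "N = {#b, c#}" using size2 by blast
  ultimately show ?thesis by blast
qed

lemma peval_uv2:
  fixes F :: "('i,'k::comm_ring_1) fpoly"
  assumes "hom 2 F" shows "peval F (uv i) = F {#i, i#}"
proof -
  have s: "supp (uv i :: 'i \<Rightarrow> 'k) \<subseteq> {i}" by (auto simp: supp_def uv_def)
  have e: "multisets_of_size {i} 2 = {{#i, i#}}"
  proof
    show "multisets_of_size {i} 2 \<subseteq> {{#i, i#}}"
    proof
      fix m assume "m \<in> multisets_of_size {i} 2"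
      hence "size m = 2" "set_mset m \<subseteq> {i}" by (auto simp: multisets_of_size_def)
      then obtain x y where "m = {#x, y#}" using size2 by blast
      with \<open>set_mset m \<subseteq> {i}\<close> show "m \<in> {{#i, i#}}" by auto
    qed
    show "{{#i, i#}} \<subseteq> multisets_of_size {i} 2" by (auto simp: multisets_of_size_def)
  qed
  show ?thesis using peval_eq[OF assms _ s] e by (simp add: pv_def uv_def)
qed

lemma Bq_comb:
  fixes q :: "nat \<Rightarrow> ('i,'k::comm_ring_1) fpoly"
  assumes "finite I" "\<forall>j\<in>I. hom 2 (q j)" "vec u" "vec v"
  shows "Bq (\<lambda>m. \<Sum>j\<in>I. c j * q j m) u v = (\<Sum>j\<in>I. c j * Bq (q j) u v)"
  using peval_comb[OF assms(1,2), of u c] peval_comb[OF assms(1,2), of v c]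
    peval_comb[OF assms(1,2), of "vadd u v" c] assms
  by (simp add: Bq_def sum_subtractf right_diff_distrib)

lemma sq_sum2:
  fixes f :: "'a \<Rightarrow> 'k::comm_ring_1"
  assumes two: "(2::'k) = 0"
  shows "finite S \<Longrightarrow> (\<Sum>i\<in>S. f i)^2 = (\<Sum>i\<in>S. (f i)^2)"
proof (induction S rule: finite_induct)
  case empty thus ?case by simp
next
  case (insert x S)
  have "(f x + (\<Sum>i\<in>S. f i))^2 = (f x)^2 + (\<Sum>i\<in>S. f i)^2 + 2 * f x * (\<Sum>i\<in>S. f i)"
    by (simp add: power2_eq_square algebra_simps)
  thus ?case using insert two by simp
qed

lemma PAIR:
  fixes Q :: "('i,'k::alg_closed_field) fpoly"
  assumes LCP: "LC \<Phi>" and hQ: "hom 2 Q" and iQ: "infinite_strength 2 Q"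
  shows "\<exists>a b. KK \<Phi> a \<and> KK \<Phi> b \<and> Bq Q a b \<noteq> 0"
proof -
  obtain P :: "('i \<Rightarrow> 'k) \<Rightarrow> ('i \<Rightarrow> 'k)" where P: "\<forall>v. vec v \<longrightarrow> KK \<Phi> (P v)"
    "\<forall>u w. vec u \<longrightarrow> vec w \<longrightarrow> P (vadd u w) = vadd (P u) (P w)"
    "\<forall>n F. 2 \<le> n \<longrightarrow> hom n F \<longrightarrow> infinite_strength n F \<longrightarrow>
          (\<exists>F'. hom n F' \<and> infinite_strength n F' \<and> (\<forall>v. vec v \<longrightarrow> peval F' v = peval F (P v)))"
    using R_set[OF LCP] by blast
  then obtain Q' where Q': "hom 2 Q'" "infinite_strength 2 Q'" "\<forall>v. vec v \<longrightarrow> peval Q' v = peval Q (P v)"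
    using hQ iQ by blast
  have "\<exists>a b. vec a \<and> vec b \<and> Bq Q' a b \<noteq> 0"
  proof (rule ccontr)
    assume "\<not> (\<exists>a b. vec a \<and> vec b \<and> Bq Q' a b \<noteq> 0)"
    hence B0: "Bq Q' a b = 0" if "vec a" "vec b" for a b using that by blast
    define d where "d = (\<lambda>i. Q' {#i, i#})"
    have pu: "peval Q' (uv i) = d i" for i using peval_uv2[OF Q'(1)] by (simp add: d_def)
    have 2: "2 * d i = 0" for i
    proof -
      have "vadd (uv i) (uv i) = vsc 2 (uv i :: 'i \<Rightarrow> 'k)" by (rule ext) (simp add: vadd_def vsc_def)
      hence "peval Q' (vadd (uv i) (uv i)) = 4 * d i" using Q_sc[OF Q'(1) vec_uv, of 2 i] pu by simp
      moreover have "Bq Q' (uv i) (uv i) = 0" using B0 by simp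
      ultimately show ?thesis by (simp add: Bq_def pu)
    qed
    have pQ: "peval Q' v = (\<Sum>i\<in>supp v. (v i)^2 * d i)" if v: "vec v" for v
    proof -
      have f: "finite (supp v)" using v by (simp add: vec_supp)
      have "peval Q' v = peval Q' (vsum (supp v) (\<lambda>i. vsc (v i) (uv i)))"
        using vec_decomp[OF f, of v] by simp
      also have "\<dots> = (\<Sum>i\<in>supp v. peval Q' (vsc (v i) (uv i)))"
        using f B0 by (intro ORTHSUM[OF Q'(1)]) auto
      also have "\<dots> = (\<Sum>i\<in>supp v. (v i)^2 * d i)" using Q_sc[OF Q'(1)] pu by simp
      finally show ?thesis .
    qed
    show False
    proof (cases "(2::'k) = 0")
      case False
      hence "d i = 0" for i using 2 by simp
      hence "\<forall>v. vec v \<longrightarrow> peval Q' v = 0" using pQ by simp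
      hence "Q' = (\<lambda>_. 0)" using IDENT[OF Q'(1)] by blast
      thus False using inf_nonzero[OF Q'(2)] by simp
    next
      case two: True
      define r where "r = (\<lambda>i. SOME y. y^2 = d i)"
      have r2: "(r i)^2 = d i" for i unfolding r_def by (rule someI_ex[OF sqrt_ex])
      define lf1 :: "('i,'k) fpoly" where "lf1 = (\<lambda>m. if size m = 1 then r (the_elem (set_mset m)) else 0)"
      have hlf1: "hom 1 lf1" by (simp add: hom_def lf1_def)
      have plf1: "peval lf1 v = (\<Sum>i\<in>supp v. r i * v i)" if "vec v" for v
        using peval_hom1[OF hlf1, of "supp v" v] that by (simp add: vec_supp lf1_def)
      have hP: "hom 2 (pmul lf1 lf1)" using hom_pmul[OF hlf1 hlf1] by (simp add: numeral_2_eq_2)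
      define D where "D = padd Q' (psc (-1) (pmul lf1 lf1))"
      have hD: "hom 2 D" using Q'(1) hP by (simp add: D_def)
      have "\<forall>v. vec v \<longrightarrow> peval D v = 0"
      proof (intro allI impI)
        fix v :: "'i \<Rightarrow> 'k" assume v: "vec v"
        have f: "finite (supp v)" using v by (simp add: vec_supp)
        have "peval (pmul lf1 lf1) v = (\<Sum>i\<in>supp v. r i * v i)^2"
          using peval_pmul[OF hlf1 hlf1 v] plf1[OF v] by (simp add: power2_eq_square)
        also have "\<dots> = (\<Sum>i\<in>supp v. (r i * v i)^2)" by (rule sq_sum2[OF two f])
        also have "\<dots> = peval Q' v" using pQ[OF v] r2 by (simp add: power_mult_distrib mult.commute)
        finally have "peval (pmul lf1 lf1) v = peval Q' v" .
        thus "peval D v = 0" using v Q'(1) hP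
          by (simp add: D_def peval_padd[where n=2] peval_psc[where n=2])
      qed
      hence "D = (\<lambda>_. 0)" using IDENT[OF hD] by blast
      hence "Q' = padd (\<lambda>_. 0) (pmul lf1 lf1)"
        by (auto simp: D_def padd_def psc_def fun_eq_iff)
      moreover have "finite_strength 2 (padd (\<lambda>_. 0) (pmul lf1 lf1))"
        by (rule fs_add[OF fs_zero]) (use hlf1 in auto)
      ultimately show False using Q'(2) by (simp add: infinite_strength_def)
    qed
  qed
  then obtain a b where ab: "vec a" "vec b" "Bq Q' a b \<noteq> 0" by blast
  have "Bq Q (P a) (P b) = Bq Q' a b"
    using ab P(2) Q'(3) by (simp add: Bq_def)
  thus ?thesis using ab P(1) by metis
qed


lemma Bq_add1: "hom 2 Q \<Longrightarrow> vec u \<Longrightarrow> vec v \<Longrightarrow> vec w \<Longrightarrow> Bq Q (vadd u v) w = Bq Q u w + Bq Q v w"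
  by (metis Bq_add2 Bq_sym)

lemma Bq_vsum1: "hom 2 Q \<Longrightarrow> vec u \<Longrightarrow> finite L \<Longrightarrow> (\<And>l. l \<in> L \<Longrightarrow> vec (X l)) \<Longrightarrow> Bq Q (vsum L X) u = (\<Sum>l\<in>L. Bq Q (X l) u)"
  by (simp add: Bq_sym[of Q _ u] Bq_vsum2)

lemma Bq_vsum_both:
  fixes Q :: "('i,'k::comm_ring_1) fpoly"
  assumes h: "hom 2 Q" and L: "finite L" and A: "\<And>l. l \<in> L \<Longrightarrow> vec (A l)" and E: "\<And>l. l \<in> L \<Longrightarrow> vec (E l)"
    and o: "\<And>l l'. l \<in> L \<Longrightarrow> l' \<in> L \<Longrightarrow> l \<noteq> l' \<Longrightarrow> Bq Q (A l) (E l') = 0"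
  shows "Bq Q (vsum L A) (vsum L E) = (\<Sum>l\<in>L. Bq Q (A l) (E l))"
proof -
  have "Bq Q (vsum L A) (vsum L E) = (\<Sum>l'\<in>L. Bq Q (vsum L A) (E l'))"
    using h L A E by (intro Bq_vsum2) auto
  also have "\<dots> = (\<Sum>l'\<in>L. \<Sum>l\<in>L. Bq Q (A l) (E l'))"
    using h L A E by (intro sum.cong refl Bq_vsum1) auto
  also have "\<dots> = (\<Sum>l'\<in>L. Bq Q (A l') (E l'))"
  proof (intro sum.cong refl)
    fix l' assume l': "l' \<in> L"
    have "(\<Sum>l\<in>L. Bq Q (A l) (E l')) = Bq Q (A l') (E l') + (\<Sum>l\<in>L - {l'}. Bq Q (A l) (E l'))"
      using L l' by (simp add: sum.remove)
    also have "(\<Sum>l\<in>L - {l'}. Bq Q (A l) (E l')) = 0" using o l' by (intro sum.neutral) auto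
    finally show "(\<Sum>l\<in>L. Bq Q (A l) (E l')) = Bq Q (A l') (E l')" by simp
  qed
  finally show ?thesis .
qed

lemma KK_vadd: "LC \<Phi> \<Longrightarrow> KK \<Phi> u \<Longrightarrow> KK \<Phi> w \<Longrightarrow> KK \<Phi> (vadd u w)"
proof -
  assume a: "LC \<Phi>" "KK \<Phi> u" "KK \<Phi> w"
  have "\<phi> (vadd u w) = 0" if "\<phi> \<in> \<Phi>" for \<phi>
  proof -
    have "lin \<phi>" using a that by (simp add: LC_def)
    thus ?thesis using a that unfolding lin_def KK_def by auto
  qed
  thus ?thesis using a by (simp add: KK_def)
qed
lemma KK_vsc: "LC \<Phi> \<Longrightarrow> KK \<Phi> u \<Longrightarrow> KK \<Phi> (vsc c u)"
proof -
  assume a: "LC \<Phi>" "KK \<Phi> u"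
  have "\<phi> (vsc c u) = 0" if "\<phi> \<in> \<Phi>" for \<phi>
  proof -
    have "lin \<phi>" using a that by (simp add: LC_def)
    thus ?thesis using a that unfolding lin_def KK_def by auto
  qed
  thus ?thesis using a by (simp add: KK_def)
qed
lemma KK_vsum: "LC \<Phi> \<Longrightarrow> finite L \<Longrightarrow> (\<And>l. l \<in> L \<Longrightarrow> KK \<Phi> (X l)) \<Longrightarrow> KK \<Phi> (vsum L X)"
proof -
  assume a: "LC \<Phi>" "finite L" "\<And>l. l \<in> L \<Longrightarrow> KK \<Phi> (X l)"
  have "vec (vsum L X)" using a by (simp add: KK_def)
  moreover have "\<phi> (vsum L X) = 0" if "\<phi> \<in> \<Phi>" for \<phi>
  proof -
    have "lin \<phi>" using a that by (simp add: LC_def)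
    hence "\<phi> (vsum L X) = (\<Sum>l\<in>L. \<phi> (X l))" using a lin_vsum[of \<phi> L X] by (simp add: KK_def)
    also have "\<dots> = 0" using a that by (intro sum.neutral) (simp add: KK_def)
    finally show ?thesis .
  qed
  ultimately show ?thesis by (simp add: KK_def)
qed
lemma KK_zero: "LC \<Phi> \<Longrightarrow> KK \<Phi> (\<lambda>_. 0)" by (simp add: KK_def LC_def lin_zero)

lemma inPhi: "x \<in> \<Phi> \<Longrightarrow> KK \<Phi> v \<Longrightarrow> x v = 0" by (simp add: KK_def)

lemma PH:
  fixes q :: "nat \<Rightarrow> ('i,'k::alg_closed_field) fpoly"
  shows "finite I \<Longrightarrow> ICS I q \<Longrightarrow> \<forall>i\<in>I. hom 2 (q i) \<Longrightarrow> LC \<Phi> \<Longrightarrow> k \<in> I \<Longrightarrow>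
    \<exists>a b. KK \<Phi> a \<and> KK \<Phi> b \<and> (\<forall>i\<in>I. Bq (q i) a b = (if i = k then 1 else 0))"
proof (induction "card I" arbitrary: I \<Phi> k rule: less_induct)
  case less
  have fI: "finite I" and iI: "ICS I q" and hq: "\<forall>i\<in>I. hom 2 (q i)" and LCP: "LC \<Phi>" and kI: "k \<in> I"
    using less.prems by auto
  have hqi: "hom 2 (q i)" if "i \<in> I" for i using hq that by blast
  define J where "J = I - {k}"
  have fJ: "finite J" and JI: "J \<subseteq> I" and kJ: "k \<notin> J" and IJ: "I = insert k J"
    using fI kI by (auto simp: J_def)
  have cJ: "card J < card I" using fI kI unfolding J_def by (rule card_Diff1_less)
  have iJ: "ICS J q" using ICS_subset[OF iI JI fI] .
  have IH: "\<exists>a b. KK \<Psi> a \<and> KK \<Psi> b \<and> (\<forall>i\<in>J. Bq (q i) a b = (if i = l then 1 else 0))"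
    if "LC \<Psi>" "l \<in> J" for \<Psi> l
  proof -
    have "\<forall>i\<in>J. hom 2 (q i)" using hq JI by blast
    from less.hyps[OF cJ fJ iJ this that] show ?thesis .
  qed
  define P where "P = (\<lambda>l (x::nat \<Rightarrow> 'i \<Rightarrow> 'k). \<forall>i\<in>J. Bq (q i) (x 0) (x 1) = (if i = l then 1 else 0))"
  have "\<exists>X::nat \<Rightarrow> nat \<Rightarrow> ('i\<Rightarrow>'k). \<forall>l\<in>J. (\<forall>j<2. KK \<Phi> (X l j)) \<and> P l (X l) \<and>
     (\<forall>l'\<in>J. l' \<noteq> l \<longrightarrow> (\<forall>i\<in>I. \<forall>j<2. \<forall>j'<2. Bq (q i) (X l j) (X l' j') = 0))"
  proof (rule SEQ[where L=J])
    show "finite I" "\<forall>i\<in>I. hom 2 (q i)" "LC \<Phi>" "finite J" "J \<subseteq> J" using fI hq LCP fJ by auto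
    fix l \<Psi> assume "l \<in> J" "LC \<Psi>" "\<Phi> \<subseteq> \<Psi>"
    then obtain a b where "KK \<Psi> a" "KK \<Psi> b" "\<forall>i\<in>J. Bq (q i) a b = (if i = l then 1 else 0)"
      using IH[OF \<open>LC \<Psi>\<close> \<open>l \<in> J\<close>] by blast
    thus "\<exists>x. (\<forall>j<2. KK \<Psi> (x j)) \<and> P l x"
      by (intro exI[where x="\<lambda>j. if j = 0 then a else b"]) (auto simp: P_def less_2_cases_iff)
  qed
  then obtain X :: "nat \<Rightarrow> nat \<Rightarrow> ('i\<Rightarrow>'k)" where X: "\<forall>l\<in>J. (\<forall>j<2. KK \<Phi> (X l j)) \<and> P l (X l) \<and>
     (\<forall>l'\<in>J. l' \<noteq> l \<longrightarrow> (\<forall>i\<in>I. \<forall>j<2. \<forall>j'<2. Bq (q i) (X l j) (X l' j') = 0))" by blast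
  define A where "A = (\<lambda>l. X l 0)"
  define Bv where "Bv = (\<lambda>l. X l 1)"
  have AK: "KK \<Phi> (A l)" "KK \<Phi> (Bv l)" if "l \<in> J" for l using X that by (auto simp: A_def Bv_def)
  have Av: "vec (A l)" "vec (Bv l)" if "l \<in> J" for l using AK[OF that] by (auto simp: KK_def)
  have ABJ: "Bq (q i) (A l) (Bv l) = (if i = l then 1 else 0)" if "l \<in> J" "i \<in> J" for i l
    using X that by (simp add: A_def Bv_def P_def)
  have AB0: "Bq (q i) (A l) (Bv l') = 0" if "l \<in> J" "l' \<in> J" "l \<noteq> l'" "i \<in> I" for i l l'
    using X that by (auto simp: A_def Bv_def)
  define \<gamma> where "\<gamma> = (\<lambda>l. Bq (q k) (A l) (Bv l))"
  define c where "c = (\<lambda>j. if j = k then 1 else - \<gamma> j)"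
  define Q where "Q = (\<lambda>m. \<Sum>j\<in>I. c j * q j m)"
  have iQ: "infinite_strength 2 Q" using iI kI unfolding ICS_def Q_def
    by (metis c_def one_neq_zero)
  have hQ: "hom 2 Q" unfolding Q_def using peval_comb[where I=I and q=q and n=2 and v="\<lambda>_. 0" and c=c] fI hq by simp
  define \<Phi>' where "\<Phi>' = \<Phi> \<union> (\<lambda>(i,l,j). Bq (q i) (X l j)) ` (I \<times> J \<times> {..<2})"
  have LC': "LC \<Phi>'"
    unfolding LC_def
  proof
    show "finite \<Phi>'" using LCP fI fJ by (simp add: \<Phi>'_def LC_def)
    show "\<forall>\<phi>\<in>\<Phi>'. lin \<phi>"
    proof
      fix \<phi> assume "\<phi> \<in> \<Phi>'"
      hence "\<phi> \<in> \<Phi> \<or> (\<exists>i l j. i \<in> I \<and> l \<in> J \<and> j < 2 \<and> \<phi> = Bq (q i) (X l j))"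
        unfolding \<Phi>'_def by auto
      thus "lin \<phi>"
      proof
        assume "\<phi> \<in> \<Phi>" thus ?thesis using LCP by (simp add: LC_def)
      next
        assume "\<exists>i l j. i \<in> I \<and> l \<in> J \<and> j < 2 \<and> \<phi> = Bq (q i) (X l j)"
        then obtain i l j where "i \<in> I" "l \<in> J" "j < 2" "\<phi> = Bq (q i) (X l j)" by blast
        moreover have "vec (X l j)" using X \<open>l \<in> J\<close> \<open>j < 2\<close> by (simp add: KK_def)
        ultimately show ?thesis using lin_Bq[OF hqi[OF \<open>i \<in> I\<close>]] by simp
      qed
    qed
  qed
  obtain a b0 where ab0: "KK \<Phi>' a" "KK \<Phi>' b0" "Bq Q a b0 \<noteq> 0" using PAIR[OF LC' hQ iQ] by blast
  have av: "vec a" "vec b0" using ab0 by (auto simp: KK_def)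
  define b where "b = vsc (1 / Bq Q a b0) b0"
  have bv: "vec b" using av by (simp add: b_def)
  have Qab: "Bq Q a b = 1" using ab0 av hQ by (simp add: b_def Bq_sc2)
  have Qab2: "Bq Q a b = Bq (q k) a b + (\<Sum>l\<in>J. - \<gamma> l * Bq (q l) a b)"
  proof -
    have "Bq Q a b = (\<Sum>j\<in>I. c j * Bq (q j) a b)" unfolding Q_def using Bq_comb[OF fI hq av(1) bv] .
    also have "\<dots> = Bq (q k) a b + (\<Sum>j\<in>J. c j * Bq (q j) a b)" using fJ kJ by (simp add: IJ c_def)
    also have "(\<Sum>j\<in>J. c j * Bq (q j) a b) = (\<Sum>l\<in>J. - \<gamma> l * Bq (q l) a b)"
      using kJ by (intro sum.cong refl) (auto simp: c_def)
    finally show ?thesis .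
  qed
  have aB: "Bq (q i) a (Bv l) = 0" if "i \<in> I" "l \<in> J" for i l
  proof -
    have "Bq (q i) (X l 1) \<in> \<Phi>'" using that unfolding \<Phi>'_def by force
    hence "Bq (q i) (Bv l) a = 0" using ab0 by (simp add: KK_def Bv_def)
    thus ?thesis by (simp add: Bq_sym)
  qed
  have Ab: "Bq (q i) (A l) b = 0" if "i \<in> I" "l \<in> J" for i l
  proof -
    have "Bq (q i) (X l 0) \<in> \<Phi>'" using that unfolding \<Phi>'_def by force
    hence "Bq (q i) (A l) b0 = 0" using ab0 by (simp add: KK_def A_def)
    thus ?thesis using hqi[OF that(1)] Av[OF that(2)] av by (simp add: b_def Bq_sc2)
  qed
  define E where "E = (\<lambda>l. vsc (- Bq (q l) a b) (Bv l))"
  have Ev: "vec (E l)" if "l \<in> J" for l using Av[OF that] by (simp add: E_def)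
  define a' where "a' = vadd a (vsum J A)"
  define b' where "b' = vadd b (vsum J E)"
  have SAv: "vec (vsum J A)" using Av fJ by simp
  have SEv: "vec (vsum J E)" using Ev fJ by simp
  have main: "Bq (q i) a' b' = Bq (q i) a b + (\<Sum>l\<in>J. - Bq (q l) a b * Bq (q i) (A l) (Bv l))" if i: "i \<in> I" for i
  proof -
    have h: "hom 2 (q i)" using hqi[OF i] .
    have t1: "Bq (q i) a (vsum J E) = 0"
      using h av fJ Ev aB i Av by (simp add: Bq_vsum2 E_def Bq_sc2)
    have t2: "Bq (q i) (vsum J A) b = 0"
      using h bv fJ Av Ab i by (simp add: Bq_vsum1)
    have t3: "Bq (q i) (vsum J A) (vsum J E) = (\<Sum>l\<in>J. Bq (q i) (A l) (E l))"
      using h fJ Av Ev AB0 i by (intro Bq_vsum_both) (auto simp: E_def Bq_sc2)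
    have "Bq (q i) a' b' = Bq (q i) a b + Bq (q i) a (vsum J E) + (Bq (q i) (vsum J A) b + Bq (q i) (vsum J A) (vsum J E))"
      using h av bv SAv SEv by (simp add: a'_def b'_def Bq_add1 Bq_add2)
    also have "\<dots> = Bq (q i) a b + (\<Sum>l\<in>J. Bq (q i) (A l) (E l))" using t1 t2 t3 by simp
    also have "(\<Sum>l\<in>J. Bq (q i) (A l) (E l)) = (\<Sum>l\<in>J. - Bq (q l) a b * Bq (q i) (A l) (Bv l))"
      using h Av by (intro sum.cong refl) (simp add: E_def Bq_sc2)
    finally show ?thesis .
  qed
  show ?case
  proof (intro exI conjI)
    have aK: "KK \<Phi> a" "KK \<Phi> b0" using ab0 KK_mono[of \<Phi>' _ \<Phi>] by (auto simp: \<Phi>'_def)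
    show "KK \<Phi> a'" unfolding a'_def using aK AK LCP fJ by (intro KK_vadd KK_vsum) auto
    show "KK \<Phi> b'" unfolding b'_def E_def b_def using aK AK LCP fJ by (intro KK_vadd KK_vsum KK_vsc) auto
    show "\<forall>i\<in>I. Bq (q i) a' b' = (if i = k then 1 else 0)"
    proof
      fix i assume i: "i \<in> I"
      show "Bq (q i) a' b' = (if i = k then 1 else 0)"
      proof (cases "i = k")
        case True
        have "(\<Sum>l\<in>J. - Bq (q l) a b * Bq (q k) (A l) (Bv l)) = (\<Sum>l\<in>J. - \<gamma> l * Bq (q l) a b)"
          by (intro sum.cong refl) (simp add: \<gamma>_def)
        thus ?thesis using main[OF i] True Qab Qab2 by simp
      next
        case False
        hence iJ: "i \<in> J" using i IJ by simp
        have "(\<Sum>l\<in>J. - Bq (q l) a b * Bq (q i) (A l) (Bv l)) = (\<Sum>l\<in>J. if l = i then - Bq (q l) a b else 0)"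
          using ABJ iJ by (intro sum.cong refl) auto
        also have "\<dots> = - Bq (q i) a b" using iJ fJ by simp
        finally show ?thesis using main[OF i] False by simp
      qed
    qed
  qed
qed


lemma LC_add:
  assumes "LC \<Phi>" "finite I" "\<forall>i\<in>I. hom 2 (q i)" "vec u"
  shows "LC (\<Phi> \<union> (\<lambda>i. Bq (q i) u) ` I)"
  using assms lin_Bq unfolding LC_def by auto

lemma HYP:
  fixes q :: "nat \<Rightarrow> ('i,'k::alg_closed_field) fpoly"
  assumes fI: "finite I" and iI: "ICS I q" and hq: "\<forall>i\<in>I. hom 2 (q i)" and LCP: "LC \<Phi>" and kI: "k \<in> I"
  shows "\<exists>e h. KK \<Phi> e \<and> KK \<Phi> h \<and> (\<forall>i\<in>I. peval (q i) e = 0 \<and> peval (q i) h = 0 \<and> Bq (q i) e h = (if i = k then 1 else 0))"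
proof -
  have hqi: "hom 2 (q i)" if "i \<in> I" for i using hq that by blast
  obtain a b where ab: "KK \<Phi> a" "KK \<Phi> b" "\<forall>i\<in>I. Bq (q i) a b = (if i = k then 1 else 0)"
    using PH[OF fI iI hq LCP kI] by blast
  have av: "vec a" "vec b" using ab by (auto simp: KK_def)
  define \<Phi>a where "\<Phi>a = (\<Phi> \<union> (\<lambda>i. Bq (q i) a) ` I) \<union> (\<lambda>i. Bq (q i) b) ` I"
  have LCa: "LC \<Phi>a" unfolding \<Phi>a_def by (intro LC_add fI hq av LCP)
  obtain z1 where z1: "KK \<Phi>a z1" "\<forall>i\<in>I. peval (q i) z1 = - peval (q i) a"
    using ThmQ[OF fI iI hq LCa, of "\<lambda>i. - peval (q i) a"] by blast
  have z1v: "vec z1" using z1 by (simp add: KK_def)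
  define \<Phi>b where "\<Phi>b = \<Phi>a \<union> (\<lambda>i. Bq (q i) z1) ` I"
  have LCb: "LC \<Phi>b" unfolding \<Phi>b_def by (intro LC_add fI hq z1v LCa)
  obtain z2 where z2: "KK \<Phi>b z2" "\<forall>i\<in>I. peval (q i) z2 = - peval (q i) b"
    using ThmQ[OF fI iI hq LCb, of "\<lambda>i. - peval (q i) b"] by blast
  have z2v: "vec z2" using z2 by (simp add: KK_def)
  have o1: "Bq (q i) a z1 = 0" "Bq (q i) b z1 = 0" if "i \<in> I" for i
    using z1(1) that unfolding KK_def \<Phi>a_def by auto
  have o2: "Bq (q i) a z2 = 0" "Bq (q i) b z2 = 0" "Bq (q i) z1 z2 = 0" if "i \<in> I" for i
    using z2(1) that unfolding KK_def \<Phi>b_def \<Phi>a_def by auto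
  have K1: "KK \<Phi> z1" using z1(1) KK_mono[of \<Phi>a z1 \<Phi>] by (auto simp: \<Phi>a_def)
  have K2: "KK \<Phi> z2" using z2(1) KK_mono[of \<Phi>b z2 \<Phi>] by (auto simp: \<Phi>b_def \<Phi>a_def)
  show ?thesis
  proof (intro exI conjI ballI)
    show "KK \<Phi> (vadd a z1)" using ab K1 LCP by (intro KK_vadd)
    show "KK \<Phi> (vadd b z2)" using ab K2 LCP by (intro KK_vadd)
    fix i assume i: "i \<in> I"
    show "peval (q i) (vadd a z1) = 0" using o1[OF i] z1(2) i by (simp add: Q_add)
    show "peval (q i) (vadd b z2) = 0" using o2[OF i] z2(2) i by (simp add: Q_add)
    have "Bq (q i) (vadd a z1) (vadd b z2) = Bq (q i) a b + Bq (q i) a z2 + (Bq (q i) z1 b + Bq (q i) z1 z2)"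
      using hqi[OF i] av z1v z2v by (simp add: Bq_add1 Bq_add2)
    also have "\<dots> = Bq (q i) a b" using o1[OF i] o2[OF i] Bq_sym[of "q i" z1 b] by simp
    finally show "Bq (q i) (vadd a z1) (vadd b z2) = (if i = k then 1 else 0)" using ab(3) i by simp
  qed
qed

lemma ISO:
  fixes q :: "nat \<Rightarrow> ('i,'k::alg_closed_field) fpoly"
  assumes fI: "finite I" and iI: "ICS I q" and hq: "\<forall>i\<in>I. hom 2 (q i)" and LCP: "LC \<Phi>"
  shows "\<exists>X::nat\<Rightarrow>nat\<Rightarrow>('i\<Rightarrow>'k). \<forall>k\<in>I. (\<forall>j<2. KK \<Phi> (X k j)) \<and>
     (\<forall>i\<in>I. peval (q i) (X k 0) = 0 \<and> peval (q i) (X k 1) = 0 \<and> Bq (q i) (X k 0) (X k 1) = (if i = k then 1 else 0)) \<and>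
     (\<forall>k'\<in>I. k' \<noteq> k \<longrightarrow> (\<forall>i\<in>I. \<forall>j<2. \<forall>j'<2. Bq (q i) (X k j) (X k' j') = 0))"
proof (rule SEQ[where L=I])
  show "finite I" "\<forall>i\<in>I. hom 2 (q i)" "LC \<Phi>" "finite I" "I \<subseteq> I" using fI hq LCP by auto
  fix k \<Psi> assume "k \<in> I" "LC \<Psi>" "\<Phi> \<subseteq> \<Psi>"
  then obtain e h where "KK \<Psi> e" "KK \<Psi> h" "\<forall>i\<in>I. peval (q i) e = 0 \<and> peval (q i) h = 0 \<and> Bq (q i) e h = (if i = k then 1 else 0)"
    using HYP[OF fI iI hq \<open>LC \<Psi>\<close> \<open>k \<in> I\<close>] by blast
  thus "\<exists>x::nat \<Rightarrow> ('i\<Rightarrow>'k). (\<forall>j<2. KK \<Psi> (x j)) \<and> (\<forall>i\<in>I. peval (q i) (x 0) = 0 \<and> peval (q i) (x 1) = 0 \<and> Bq (q i) (x 0) (x 1) = (if i = k then 1 else 0))"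
    by (intro exI[where x="\<lambda>j. if j = 0 then e else h"]) (auto simp: less_2_cases_iff)
qed

definition tri3 :: "'i multiset \<Rightarrow> ('i\<Rightarrow>'k::comm_ring_1) \<Rightarrow> ('i\<Rightarrow>'k) \<Rightarrow> ('i\<Rightarrow>'k) \<Rightarrow> 'k" where
  "tri3 m X Y Z = pv m (vadd (vadd X Y) Z) - pv m (vadd X Y) - pv m (vadd X Z) - pv m (vadd Y Z) + pv m X + pv m Y + pv m Z"
definition T3 :: "('i,'k::comm_ring_1) fpoly \<Rightarrow> ('i\<Rightarrow>'k) \<Rightarrow> ('i\<Rightarrow>'k) \<Rightarrow> ('i\<Rightarrow>'k) \<Rightarrow> 'k" where
  "T3 f X Y Z = peval f (vadd (vadd X Y) Z) - peval f (vadd X Y) - peval f (vadd X Z) - peval f (vadd Y Z) + peval f X + peval f Y + peval f Z"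

lemma tri3_eq: "tri3 {#i, j, l#} X Y Z = X i*Y j*Z l + X i*Z j*Y l + Y i*X j*Z l + Y i*Z j*X l + Z i*X j*Y l + Z i*Y j*X l"
  by (simp add: tri3_def pv_def vadd_def algebra_simps)

lemma tri3_lin:
  assumes "size m = 3"
  shows "tri3 m (vadd X X') Y Z = tri3 m X Y Z + tri3 m X' Y Z" "tri3 m (vsc c X) Y Z = c * tri3 m X Y Z"
    "tri3 m X Y (vadd Z Z') = tri3 m X Y Z + tri3 m X Y Z'" "tri3 m X Y (vsc c Z) = c * tri3 m X Y Z"
    "tri3 m X (\<lambda>_. 0) Z = 0"
proof -
  obtain i j l where m: "m = {#i, j, l#}" using size3[OF assms] by blast
  show "tri3 m (vadd X X') Y Z = tri3 m X Y Z + tri3 m X' Y Z"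
    unfolding m tri3_eq by (simp add: vadd_def distrib_left distrib_right)
  show "tri3 m (vsc c X) Y Z = c * tri3 m X Y Z"
    unfolding m tri3_eq by (simp add: vsc_def distrib_left mult_ac)
  show "tri3 m X Y (vadd Z Z') = tri3 m X Y Z + tri3 m X Y Z'"
    unfolding m tri3_eq by (simp add: vadd_def distrib_left distrib_right)
  show "tri3 m X Y (vsc c Z) = c * tri3 m X Y Z"
    unfolding m tri3_eq by (simp add: vsc_def distrib_left mult_ac)
  show "tri3 m X (\<lambda>_. 0) Z = 0"
    unfolding m tri3_eq by simp
qed

lemma T3_sum:
  fixes f :: "('i,'k::comm_ring_1) fpoly"
  assumes h: "hom 3 f" and S: "finite S" "supp X \<subseteq> S" "supp Y \<subseteq> S" "supp Z \<subseteq> S"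
  shows "T3 f X Y Z = (\<Sum>m\<in>multisets_of_size S 3. f m * tri3 m X Y Z)"
proof -
  have s: "supp (vadd (vadd X Y) Z) \<subseteq> S" "supp (vadd X Y) \<subseteq> S" "supp (vadd X Z) \<subseteq> S" "supp (vadd Y Z) \<subseteq> S"
    using S supp_vadd[of "vadd X Y" Z] supp_vadd[of X Y] supp_vadd[of X Z] supp_vadd[of Y Z] by blast+
  let ?M = "multisets_of_size S 3"
  have "(\<Sum>m\<in>?M. f m * tri3 m X Y Z) = (\<Sum>m\<in>?M. f m * pv m (vadd (vadd X Y) Z)) - (\<Sum>m\<in>?M. f m * pv m (vadd X Y))
      - (\<Sum>m\<in>?M. f m * pv m (vadd X Z)) - (\<Sum>m\<in>?M. f m * pv m (vadd Y Z)) + (\<Sum>m\<in>?M. f m * pv m X)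
      + (\<Sum>m\<in>?M. f m * pv m Y) + (\<Sum>m\<in>?M. f m * pv m Z)"
    by (simp add: tri3_def sum_subtractf[symmetric] sum.distrib[symmetric] algebra_simps)
  also have "\<dots> = T3 f X Y Z"
    unfolding T3_def using peval_eq[OF h S(1)] s S by simp
  finally show ?thesis by simp
qed

lemma T3_lin1:
  fixes f :: "('i,'k::comm_ring_1) fpoly"
  assumes h: "hom 3 f" and Y: "vec Y" and Z: "vec Z"
  shows "lin (\<lambda>X. T3 f X Y Z)"
  unfolding lin_def
proof (intro conjI allI impI)
  fix X X' :: "'i \<Rightarrow> 'k" assume X: "vec X" and X': "vec X'"
  let ?S = "supp X \<union> supp X' \<union> supp Y \<union> supp Z"
  have f: "finite ?S" using X X' Y Z by (simp add: vec_supp)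
  have ss: "supp X \<subseteq> ?S" "supp X' \<subseteq> ?S" "supp Y \<subseteq> ?S" "supp Z \<subseteq> ?S" "supp (vadd X X') \<subseteq> ?S"
    using supp_vadd[of X X'] by auto
  show "T3 f (vadd X X') Y Z = T3 f X Y Z + T3 f X' Y Z"
    using T3_sum[OF h f ss(5,3,4)] T3_sum[OF h f ss(1,3,4)] T3_sum[OF h f ss(2,3,4)]
    by (simp add: tri3_lin multisets_of_size_def distrib_left sum.distrib)
next
  fix c and X :: "'i \<Rightarrow> 'k" assume X: "vec X"
  let ?S = "supp X \<union> supp Y \<union> supp Z"
  have f: "finite ?S" using X Y Z by (simp add: vec_supp)
  have ss: "supp X \<subseteq> ?S" "supp Y \<subseteq> ?S" "supp Z \<subseteq> ?S" "supp (vsc c X) \<subseteq> ?S"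
    using supp_vsc[of c X] by auto
  show "T3 f (vsc c X) Y Z = c * T3 f X Y Z"
    using T3_sum[OF h f ss(4,2,3)] T3_sum[OF h f ss(1,2,3)]
    by (simp add: tri3_lin multisets_of_size_def sum_distrib_left algebra_simps)
qed

lemma T3_lin3:
  fixes f :: "('i,'k::comm_ring_1) fpoly"
  assumes h: "hom 3 f" and X: "vec X" and Y: "vec Y"
  shows "lin (\<lambda>Z. T3 f X Y Z)"
  unfolding lin_def
proof (intro conjI allI impI)
  fix Z Z' :: "'i \<Rightarrow> 'k" assume Z: "vec Z" and Z': "vec Z'"
  let ?S = "supp X \<union> supp Y \<union> supp Z \<union> supp Z'"
  have f: "finite ?S" using X Y Z Z' by (simp add: vec_supp)
  have ss: "supp X \<subseteq> ?S" "supp Y \<subseteq> ?S" "supp Z \<subseteq> ?S" "supp Z' \<subseteq> ?S" "supp (vadd Z Z') \<subseteq> ?S"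
    using supp_vadd[of Z Z'] by auto
  show "T3 f X Y (vadd Z Z') = T3 f X Y Z + T3 f X Y Z'"
    using T3_sum[OF h f ss(1,2,5)] T3_sum[OF h f ss(1,2,3)] T3_sum[OF h f ss(1,2,4)]
    by (simp add: tri3_lin multisets_of_size_def distrib_left sum.distrib)
next
  fix c and Z :: "'i \<Rightarrow> 'k" assume Z: "vec Z"
  let ?S = "supp X \<union> supp Y \<union> supp Z"
  have f: "finite ?S" using X Y Z by (simp add: vec_supp)
  have ss: "supp X \<subseteq> ?S" "supp Y \<subseteq> ?S" "supp Z \<subseteq> ?S" "supp (vsc c Z) \<subseteq> ?S"
    using supp_vsc[of c Z] by auto
  show "T3 f X Y (vsc c Z) = c * T3 f X Y Z"
    using T3_sum[OF h f ss(1,2,4)] T3_sum[OF h f ss(1,2,3)]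
    by (simp add: tri3_lin multisets_of_size_def sum_distrib_left algebra_simps)
qed

lemma T3_zero2:
  fixes f :: "('i,'k::comm_ring_1) fpoly"
  assumes h: "hom 3 f" and X: "vec X" and Z: "vec Z"
  shows "T3 f X (\<lambda>_. 0) Z = 0"
proof -
  let ?S = "supp X \<union> supp Z"
  have f: "finite ?S" using X Z by (simp add: vec_supp)
  have ss: "supp X \<subseteq> ?S" "supp (\<lambda>_. 0::'k) \<subseteq> ?S" "supp Z \<subseteq> ?S" by (auto simp: supp_def)
  show ?thesis using T3_sum[OF h f ss] by (simp add: tri3_lin multisets_of_size_def)
qed

lemma MP:
  fixes f :: "('i,'k::comm_ring_1) fpoly"
  assumes h: "hom 3 f" and X: "vec X" and Y: "vec Y" and Z: "vec Z"
  shows "\<exists>p. (\<forall>\<mu>. poly p \<mu> = peval f (vadd (vadd (vsc \<mu> X) (vsc (\<mu>^2) Y)) Z)) \<and> coeff p 3 = peval f X + T3 f X Y Z"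
proof -
  let ?S = "supp X \<union> supp Y \<union> supp Z"
  have fS: "finite ?S" using X Y Z by (simp add: vec_supp)
  let ?M = "multisets_of_size ?S 3"
  define p where "p = (\<Sum>m\<in>?M. smult (f m) (\<Prod>i\<in>#m. [:Z i, X i, Y i:]))"
  show ?thesis
  proof (intro exI conjI allI)
    fix \<mu> :: 'k
    let ?W = "vadd (vadd (vsc \<mu> X) (vsc (\<mu>^2) Y)) Z"
    have sW: "supp ?W \<subseteq> ?S"
      using supp_vadd[of "vadd (vsc \<mu> X) (vsc (\<mu>^2) Y)" Z] supp_vadd[of "vsc \<mu> X" "vsc (\<mu>^2) Y"]
        supp_vsc[of \<mu> X] supp_vsc[of "\<mu>^2" Y] by blast
    have "poly p \<mu> = (\<Sum>m\<in>?M. f m * (\<Prod>i\<in>#m. poly [:Z i, X i, Y i:] \<mu>))"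
      by (simp add: p_def poly_sum poly_prod_mset)
    also have "\<dots> = (\<Sum>m\<in>?M. f m * pv m ?W)"
      unfolding pv_def by (intro sum.cong refl arg_cong2[where f="(*)"] arg_cong[where f=prod_mset] image_mset_cong)
        (simp add: vadd_def vsc_def algebra_simps power2_eq_square)
    also have "\<dots> = peval f ?W" using peval_eq[OF h fS sW] by simp
    finally show "poly p \<mu> = peval f ?W" .
  next
    have ss: "supp X \<subseteq> ?S" "supp Y \<subseteq> ?S" "supp Z \<subseteq> ?S" by auto
    have "coeff p 3 = (\<Sum>m\<in>?M. f m * coeff (\<Prod>i\<in>#m. [:Z i, X i, Y i:]) 3)"
      by (simp add: p_def coeff_sum)
    also have "\<dots> = (\<Sum>m\<in>?M. f m * pv m X + f m * tri3 m X Y Z)"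
    proof (intro sum.cong refl)
      fix m assume "m \<in> ?M"
      hence "size m = 3" by (simp add: multisets_of_size_def)
      then obtain i j l where m: "m = {#i, j, l#}" using size3 by blast
      show "f m * coeff (\<Prod>i\<in>#m. [:Z i, X i, Y i:]) 3 = f m * pv m X + f m * tri3 m X Y Z"
        by (simp add: m tri3_eq pv_def coeff_mult numeral_3_eq_3 algebra_simps)
    qed
    also have "\<dots> = peval f X + T3 f X Y Z"
      using peval_eq[OF h fS ss(1)] T3_sum[OF h fS ss] by (simp add: sum.distrib)
    finally show "coeff p 3 = peval f X + T3 f X Y Z" .
  qed
qed


lemma exists_nonroot:
  fixes p :: "'k::alg_closed_field poly"
  assumes "p \<noteq> 0" shows "\<exists>\<mu>. \<mu> \<noteq> 0 \<and> poly p \<mu> \<noteq> 0"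
proof (rule ccontr)
  assume "\<not> (\<exists>\<mu>. \<mu> \<noteq> 0 \<and> poly p \<mu> \<noteq> 0)"
  hence "UNIV - {0} \<subseteq> {x. poly p x = 0}" by auto
  moreover have "finite {x. poly p x = 0}" using poly_roots_finite[OF assms] .
  ultimately have "finite (UNIV - {0::'k})" by (rule finite_subset)
  thus False using infinite_alg by (metis Diff_infinite_finite finite.emptyI finite_insert)
qed

lemma NULLF:
  fixes q :: "nat \<Rightarrow> ('i,'k::alg_closed_field) fpoly" and f :: "('i,'k) fpoly"
  assumes fI: "finite I" and iI: "ICS I q" and hq: "\<forall>i\<in>I. hom 2 (q i)" and LCP: "LC \<Phi>"
    and hf: "hom 3 f" and iF: "infinite_strength 3 f"
  shows "\<exists>g. KK \<Phi> g \<and> (\<forall>i\<in>I. peval (q i) g = 0) \<and> peval f g \<noteq> 0"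
proof -
  have hqi: "hom 2 (q i)" if "i \<in> I" for i using hq that by blast
  obtain X :: "nat\<Rightarrow>nat\<Rightarrow>('i\<Rightarrow>'k)" where X: "\<forall>k\<in>I. (\<forall>j<2. KK \<Phi> (X k j)) \<and>
     (\<forall>i\<in>I. peval (q i) (X k 0) = 0 \<and> peval (q i) (X k 1) = 0 \<and> Bq (q i) (X k 0) (X k 1) = (if i = k then 1 else 0)) \<and>
     (\<forall>k'\<in>I. k' \<noteq> k \<longrightarrow> (\<forall>i\<in>I. \<forall>j<2. \<forall>j'<2. Bq (q i) (X k j) (X k' j') = 0))"
    using ISO[OF fI iI hq LCP] by blast
  define E where "E = (\<lambda>k. X k 0)"
  define H where "H = (\<lambda>k. X k 1)"
  have EK: "KK \<Phi> (E k)" "KK \<Phi> (H k)" if "k \<in> I" for k using X that by (auto simp: E_def H_def)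
  have Ev: "vec (E k)" "vec (H k)" if "k \<in> I" for k using EK[OF that] by (auto simp: KK_def)
  have Eq: "peval (q i) (E k) = 0" "peval (q i) (H k) = 0" "Bq (q i) (E k) (H k) = (if i = k then 1 else 0)"
    if "k \<in> I" "i \<in> I" for i k using X that by (auto simp: E_def H_def)
  have Eo: "Bq (q i) (E k) (E k') = 0" "Bq (q i) (E k) (H k') = 0" "Bq (q i) (H k) (H k') = 0"
    if "k \<in> I" "k' \<in> I" "k \<noteq> k'" "i \<in> I" for i k k' using X that by (auto simp: E_def H_def)
  define e where "e = vsum I E"
  have ev: "vec e" using Ev fI by (simp add: e_def)
  have eK: "KK \<Phi> e" unfolding e_def using LCP fI EK by (intro KK_vsum) auto
  have qe: "peval (q i) e = 0" if i: "i \<in> I" for i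
  proof -
    have "peval (q i) e = (\<Sum>k\<in>I. peval (q i) (E k))"
      unfolding e_def using hqi[OF i] fI Ev Eo i by (intro ORTHSUM) auto
    also have "\<dots> = 0" using Eq i by simp
    finally show ?thesis .
  qed
  have eH: "Bq (q i) e (H k) = (if i = k then 1 else 0)" if i: "i \<in> I" and k: "k \<in> I" for i k
  proof -
    have "Bq (q i) e (H k) = (\<Sum>l\<in>I. Bq (q i) (E l) (H k))"
      unfolding e_def using hqi[OF i] fI Ev k by (intro Bq_vsum1) auto
    also have "\<dots> = Bq (q i) (E k) (H k) + (\<Sum>l\<in>I - {k}. Bq (q i) (E l) (H k))"
      using fI k by (simp add: sum.remove)
    also have "(\<Sum>l\<in>I - {k}. Bq (q i) (E l) (H k)) = 0" using Eo i k by (intro sum.neutral) auto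
    finally show ?thesis using Eq[OF k i] by simp
  qed
  define \<Phi>w where "\<Phi>w = ((\<Phi> \<union> (\<lambda>(i,k). Bq (q i) (H k)) ` (I \<times> I)) \<union> (\<lambda>i. Bq (q i) e) ` I) \<union> (\<lambda>k. \<lambda>x. T3 f x e (H k)) ` I"
  have LCw: "LC \<Phi>w"
    unfolding LC_def
  proof
    show "finite \<Phi>w" using LCP fI by (simp add: \<Phi>w_def LC_def)
    show "\<forall>\<phi>\<in>\<Phi>w. lin \<phi>"
      using LCP Ev ev T3_lin1[OF hf ev] unfolding \<Phi>w_def LC_def by (auto intro!: lin_Bq hqi)
  qed
  obtain w where w: "KK \<Phi>w w" "peval f w \<noteq> 0" using I1[OF LCw _ hf iF] by auto
  have wv: "vec w" using w by (simp add: KK_def)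
  have wK: "KK \<Phi> w" using w(1) KK_mono[of \<Phi>w w \<Phi>] by (auto simp: \<Phi>w_def)
  have wH: "Bq (q i) w (H k) = 0" if "i \<in> I" "k \<in> I" for i k
  proof -
    have "Bq (q i) (H k) \<in> \<Phi>w" using that unfolding \<Phi>w_def by force
    hence "Bq (q i) (H k) w = 0" using w(1) by (simp add: KK_def)
    thus ?thesis by (simp add: Bq_sym)
  qed
  have we: "Bq (q i) w e = 0" if "i \<in> I" for i
  proof -
    have "Bq (q i) e \<in> \<Phi>w" using that unfolding \<Phi>w_def by force
    hence "Bq (q i) e w = 0" using w(1) by (simp add: KK_def)
    thus ?thesis by (simp add: Bq_sym)
  qed
  have wT: "T3 f w e (H k) = 0" if "k \<in> I" for k
  proof -
    have "(\<lambda>x. T3 f x e (H k)) \<in> \<Phi>w" using that unfolding \<Phi>w_def by force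
    from inPhi[OF this w(1)] show ?thesis by simp
  qed
  define cc where "cc = (\<lambda>k. - peval (q k) w)"
  define Dv where "Dv = (\<lambda>k. vsc (cc k) (H k))"
  have Dvv: "vec (Dv k)" if "k \<in> I" for k using Ev[OF that] by (simp add: Dv_def)
  define D where "D = vsum I Dv"
  have Dv: "vec D" using Dvv fI by (simp add: D_def)
  have DK: "KK \<Phi> D" unfolding D_def Dv_def using LCP fI EK by (intro KK_vsum KK_vsc) auto
  have TD: "T3 f w e D = 0"
  proof -
    have l: "lin (\<lambda>Z. T3 f w e Z)" by (rule T3_lin3[OF hf wv ev])
    have "T3 f w e D = (\<Sum>k\<in>I. T3 f w e (Dv k))" unfolding D_def using lin_vsum[OF l fI] Dvv by blast
    also have "\<dots> = 0" using l Ev wT by (intro sum.neutral) (simp add: Dv_def lin_def)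
    finally show ?thesis .
  qed
  obtain p where p: "\<forall>\<mu>. poly p \<mu> = peval f (vadd (vadd (vsc \<mu> w) (vsc (\<mu>^2) e)) D)" "coeff p 3 = peval f w + T3 f w e D"
    using MP[OF hf wv ev Dv] by blast
  have "p \<noteq> 0" using p(2) TD w(2) by auto
  then obtain \<mu> where mu: "\<mu> \<noteq> 0" "poly p \<mu> \<noteq> 0" using exists_nonroot by blast
  define g where "g = vadd (vadd w (vsc \<mu> e)) (vsc (1/\<mu>) D)"
  have gv: "vec g" using wv ev Dv by (simp add: g_def)
  have "vsc \<mu> g = vadd (vadd (vsc \<mu> w) (vsc (\<mu>^2) e)) D"
    using mu(1) by (simp add: g_def vsc_def vadd_def fun_eq_iff algebra_simps power2_eq_square)
  hence "peval f (vsc \<mu> g) = poly p \<mu>" using p(1) by simp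
  hence fg: "peval f g \<noteq> 0" using peval_vsc[OF hf gv, of \<mu>] mu by auto
  have qg: "peval (q i) g = 0" if i: "i \<in> I" for i
  proof -
    have h: "hom 2 (q i)" using hqi[OF i] .
    define W where "W = vadd w (vsc \<mu> e)"
    have Wv: "vec W" using wv ev by (simp add: W_def)
    have qW: "peval (q i) W = peval (q i) w"
      using h wv ev we[OF i] qe[OF i] by (simp add: W_def Q_add Q_sc Bq_sc2)
    have qD: "peval (q i) D = 0"
    proof -
      have "peval (q i) D = (\<Sum>k\<in>I. peval (q i) (Dv k))"
        unfolding D_def using h fI Dvv Eo i Ev by (intro ORTHSUM) (auto simp: Dv_def Bq_sc1 Bq_sc2)
      also have "\<dots> = 0" using h Ev Eq i by (intro sum.neutral) (simp add: Dv_def Q_sc)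
      finally show ?thesis .
    qed
    have BWH: "Bq (q i) W (H k) = \<mu> * (if i = k then 1 else 0)" if k: "k \<in> I" for k
      using h wv ev Ev[OF k] wH[OF i k] eH[OF i k] by (simp add: W_def Bq_add1 Bq_sc1)
    have BWD: "Bq (q i) W D = \<mu> * cc i"
    proof -
      have "Bq (q i) W D = (\<Sum>k\<in>I. Bq (q i) W (Dv k))"
        unfolding D_def using h Wv fI Dvv by (intro Bq_vsum2) auto
      also have "\<dots> = (\<Sum>k\<in>I. if k = i then \<mu> * cc i else 0)"
        using h Wv Ev BWH by (intro sum.cong refl) (auto simp: Dv_def Bq_sc2)
      also have "\<dots> = \<mu> * cc i" using fI i by simp
      finally show ?thesis .
    qed
    have "peval (q i) g = peval (q i) W + (1/\<mu>)^2 * peval (q i) D + (1/\<mu>) * Bq (q i) W D"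
      using h Wv Dv by (simp add: g_def W_def[symmetric] Q_add Q_sc Bq_sc2)
    also have "\<dots> = 0" using qW qD BWD mu(1) by (simp add: cc_def)
    finally show ?thesis .
  qed
  have gK: "KK \<Phi> g" unfolding g_def using LCP wK eK DK by (intro KK_vadd KK_vsc)
  show ?thesis using gK qg fg by blast
qed


lemma FINAL:
  fixes q :: "nat \<Rightarrow> ('i,'k::alg_closed_field) fpoly" and f :: "('i,'k) fpoly"
  assumes fI: "finite I" and iI: "ICS I q" and hq: "\<forall>i\<in>I. hom 2 (q i)" and LCP: "LC \<Phi>"
    and hf: "hom 3 f" and iF: "infinite_strength 3 f"
  shows "\<exists>v. KK \<Phi> v \<and> peval f v = a \<and> (\<forall>i\<in>I. peval (q i) v = b i)"
proof -
  have hqi: "hom 2 (q i)" if "i \<in> I" for i using hq that by blast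
  obtain g where g: "KK \<Phi> g" "\<forall>i\<in>I. peval (q i) g = 0" "peval f g \<noteq> 0"
    using NULLF[OF fI iI hq LCP hf iF] by blast
  have gv: "vec g" using g by (simp add: KK_def)
  define \<Phi>2 where "\<Phi>2 = \<Phi> \<union> (\<lambda>i. Bq (q i) g) ` I"
  have LC2: "LC \<Phi>2" unfolding \<Phi>2_def by (intro LC_add LCP fI hq gv)
  obtain X :: "nat\<Rightarrow>nat\<Rightarrow>('i\<Rightarrow>'k)" where X: "\<forall>k\<in>I. (\<forall>j<2. KK \<Phi>2 (X k j)) \<and>
     (\<forall>i\<in>I. peval (q i) (X k 0) = 0 \<and> peval (q i) (X k 1) = 0 \<and> Bq (q i) (X k 0) (X k 1) = (if i = k then 1 else 0)) \<and>
     (\<forall>k'\<in>I. k' \<noteq> k \<longrightarrow> (\<forall>i\<in>I. \<forall>j<2. \<forall>j'<2. Bq (q i) (X k j) (X k' j') = 0))"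
    using ISO[OF fI iI hq LC2] by blast
  define E where "E = (\<lambda>k. X k 0)"
  define H where "H = (\<lambda>k. X k 1)"
  have EK: "KK \<Phi>2 (E k)" "KK \<Phi>2 (H k)" if "k \<in> I" for k using X that by (auto simp: E_def H_def)
  have Ev: "vec (E k)" "vec (H k)" if "k \<in> I" for k using EK[OF that] by (auto simp: KK_def)
  have Eq: "peval (q i) (E k) = 0" "peval (q i) (H k) = 0" "Bq (q i) (E k) (H k) = (if i = k then 1 else 0)"
    if "k \<in> I" "i \<in> I" for i k using X that by (auto simp: E_def H_def)
  have Eo: "Bq (q i) (E k) (E k') = 0" "Bq (q i) (E k) (H k') = 0" "Bq (q i) (H k) (H k') = 0"
    if "k \<in> I" "k' \<in> I" "k \<noteq> k'" "i \<in> I" for i k k' using X that by (auto simp: E_def H_def)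
  define Uk where "Uk = (\<lambda>k. vadd (E k) (vsc (b k) (H k)))"
  have Ukv: "vec (Uk k)" if "k \<in> I" for k using Ev[OF that] by (simp add: Uk_def)
  have UkK: "KK \<Phi>2 (Uk k)" if "k \<in> I" for k unfolding Uk_def using LC2 EK[OF that] by (intro KK_vadd KK_vsc)
  define U where "U = vsum I Uk"
  have Uv: "vec U" using Ukv fI by (simp add: U_def)
  have UK: "KK \<Phi>2 U" unfolding U_def using LC2 fI UkK by (intro KK_vsum) auto
  have qU: "peval (q i) U = b i" if i: "i \<in> I" for i
  proof -
    have h: "hom 2 (q i)" using hqi[OF i] .
    have "peval (q i) U = (\<Sum>k\<in>I. peval (q i) (Uk k))"
      unfolding U_def
    proof (rule ORTHSUM[OF h fI])
      show "\<forall>l\<in>I. vec (Uk l)" using Ukv by simp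
      show "\<forall>l\<in>I. \<forall>l'\<in>I. l \<noteq> l' \<longrightarrow> Bq (q i) (Uk l) (Uk l') = 0"
      proof (intro ballI impI)
        fix l l' assume l: "l \<in> I" "l' \<in> I" "l \<noteq> l'"
        have "Bq (q i) (H l) (E l') = 0" using Eo(2)[OF l(2) l(1) _ i] l(3) Bq_sym by metis
        thus "Bq (q i) (Uk l) (Uk l') = 0"
          using h Ev[OF l(1)] Ev[OF l(2)] Eo[OF l i]
          by (simp add: Uk_def Bq_add1 Bq_add2 Bq_sc1 Bq_sc2)
      qed
    qed
    also have "\<dots> = (\<Sum>k\<in>I. if k = i then b i else 0)"
    proof (intro sum.cong refl)
      fix k assume k: "k \<in> I"
      have "peval (q i) (Uk k) = b k * (if i = k then 1 else 0)"
        using h Ev[OF k] Eq[OF k i] by (simp add: Uk_def Q_add Q_sc Bq_sc2)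
      thus "peval (q i) (Uk k) = (if k = i then b i else 0)" by auto
    qed
    also have "\<dots> = b i" using fI i by simp
    finally show ?thesis .
  qed
  have gU: "Bq (q i) g U = 0" if "i \<in> I" for i
  proof -
    have "Bq (q i) g \<in> \<Phi>2" using that unfolding \<Phi>2_def by blast
    from inPhi[OF this UK] show ?thesis .
  qed
  obtain p where p: "\<forall>s. poly p s = peval f (vadd (vadd (vsc s g) (vsc (s^2) (\<lambda>_. 0))) U)"
    "coeff p 3 = peval f g + T3 f g (\<lambda>_. 0) U"
    using MP[OF hf gv vec_zero Uv] by blast
  have p3: "coeff p 3 = peval f g" using p(2) T3_zero2[OF hf gv Uv] by simp
  have ev: "vadd (vadd (vsc s g) (vsc (s^2) (\<lambda>_. 0))) U = vadd (vsc s g) U" for s :: 'k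
    by (simp add: vadd_def vsc_def)
  define p' where "p' = p - [:a:]"
  have "coeff p' 3 \<noteq> 0" using p3 g(3) by (simp add: p'_def numeral_3_eq_3)
  hence "3 \<le> degree p'" by (rule le_degree)
  hence "degree p' > 0" by simp
  then obtain s where "poly p' s = 0" using alg_closed_imp_poly_has_root by blast
  hence fs: "peval f (vadd (vsc s g) U) = a" using p(1) ev by (simp add: p'_def)
  define v where "v = vadd (vsc s g) U"
  show ?thesis
  proof (intro exI conjI)
    show "KK \<Phi> v" unfolding v_def
      using LCP g(1) UK KK_mono[of \<Phi>2 U \<Phi>] by (intro KK_vadd KK_vsc) (auto simp: \<Phi>2_def)
    show "peval f v = a" using fs by (simp add: v_def)
    show "\<forall>i\<in>I. peval (q i) v = b i"
    proof
      fix i assume i: "i \<in> I"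
      show "peval (q i) v = b i"
        using hqi[OF i] gv Uv g(2) i qU[OF i] gU[OF i] by (simp add: v_def Q_add Q_sc Bq_sc1)
    qed
  qed
qed

theorem corollary2p2:
  fixes f :: "('i, 'k::alg_closed_field) fpoly"
    and q :: "nat \<Rightarrow> ('i, 'k) fpoly" and q' :: "nat \<Rightarrow> ('i, 'k) fpoly"
    and l :: "nat \<Rightarrow> ('i, 'k) fpoly"
    and r s t :: nat and a :: 'k and b :: "nat \<Rightarrow> 'k"
  assumes "hom 3 f" and "infinite_strength 3 f"
    and "\<forall>i<r. hom 2 (q i)" and "infinite_collective_strength 2 r q"
    and "\<forall>i<s. hom 2 (q' i) \<and> finite_strength 2 (q' i)"
    and "\<forall>i<t. hom 1 (l i)"
  shows "\<exists>v. vec v \<and> peval f v = a \<and> (\<forall>i<r. peval (q i) v = b i)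
           \<and> (\<forall>i<s. peval (q' i) v = 0) \<and> (\<forall>i<t. peval (l i) v = 0)"
proof -
  note A = assms
  have "\<forall>i\<in>{..<s}. \<exists>NGH :: nat \<times> (nat \<Rightarrow> ('i,'k) fpoly) \<times> (nat \<Rightarrow> ('i,'k) fpoly).
      (\<forall>j<fst NGH. hom 1 (fst (snd NGH) j) \<and> hom 1 (snd (snd NGH) j)) \<and>
      q' i = (\<lambda>m. \<Sum>j<fst NGH. pmul (fst (snd NGH) j) (snd (snd NGH) j) m)"
  proof
    fix i assume "i \<in> {..<s}"
    hence "finite_strength 2 (q' i)" using A(5) by simp
    thus "\<exists>NGH :: nat \<times> (nat \<Rightarrow> ('i,'k) fpoly) \<times> (nat \<Rightarrow> ('i,'k) fpoly).
      (\<forall>j<fst NGH. hom 1 (fst (snd NGH) j) \<and> hom 1 (snd (snd NGH) j)) \<and>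
      q' i = (\<lambda>m. \<Sum>j<fst NGH. pmul (fst (snd NGH) j) (snd (snd NGH) j) m)"
      unfolding finite_strength_def
    proof (elim exE conjE)
      fix n :: nat and gg hh :: "nat \<Rightarrow> ('i,'k) fpoly" and dg dh :: "nat \<Rightarrow> nat"
      assume H: "\<forall>j<n. 0 < dg j \<and> dg j < 2 \<and> 0 < dh j \<and> dh j < 2 \<and> hom (dg j) (gg j) \<and> hom (dh j) (hh j)"
        and E: "q' i = (\<lambda>m. \<Sum>j<n. pmul (gg j) (hh j) m)"
      have "\<forall>j<n. hom 1 (gg j) \<and> hom 1 (hh j)"
      proof (intro allI impI)
        fix j assume "j < n"
        hence "dg j = 1" "dh j = 1" "hom (dg j) (gg j)" "hom (dh j) (hh j)" using H by auto
        thus "hom 1 (gg j) \<and> hom 1 (hh j)" by simp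
      qed
      thus "\<exists>NGH :: nat \<times> (nat \<Rightarrow> ('i,'k) fpoly) \<times> (nat \<Rightarrow> ('i,'k) fpoly).
        (\<forall>j<fst NGH. hom 1 (fst (snd NGH) j) \<and> hom 1 (snd (snd NGH) j)) \<and>
        q' i = (\<lambda>m. \<Sum>j<fst NGH. pmul (fst (snd NGH) j) (snd (snd NGH) j) m)"
        using E by (intro exI[where x="(n, gg, hh)"]) simp
    qed
  qed
  then obtain NGH :: "nat \<Rightarrow> nat \<times> (nat \<Rightarrow> ('i,'k) fpoly) \<times> (nat \<Rightarrow> ('i,'k) fpoly)" where
    NGH: "\<forall>i\<in>{..<s}. (\<forall>j<fst (NGH i). hom 1 (fst (snd (NGH i)) j) \<and> hom 1 (snd (snd (NGH i)) j)) \<and>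
      q' i = (\<lambda>m. \<Sum>j<fst (NGH i). pmul (fst (snd (NGH i)) j) (snd (snd (NGH i)) j) m)"
    by (rule bchoice[THEN exE]) blast
  define N where "N = (\<lambda>i. fst (NGH i))"
  define G where "G = (\<lambda>i. fst (snd (NGH i)))"
  define Hh where "Hh = (\<lambda>i. snd (snd (NGH i)))"
  have hG: "hom 1 (G i j)" "hom 1 (Hh i j)" if "i < s" "j < N i" for i j
    using NGH that by (auto simp: N_def G_def Hh_def)
  have qE: "q' i = (\<lambda>m. \<Sum>j<N i. pmul (G i j) (Hh i j) m)" if "i < s" for i
    using NGH that by (auto simp: N_def G_def Hh_def)
  define \<Phi> where "\<Phi> = (\<lambda>i. peval (l i)) ` {..<t} \<union> (\<lambda>(i,j). peval (G i j)) ` (SIGMA i:{..<s}. {..<N i})"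
  have LCP: "LC \<Phi>"
    unfolding LC_def
  proof
    show "finite \<Phi>" by (simp add: \<Phi>_def)
    show "\<forall>\<phi>\<in>\<Phi>. lin \<phi>" using A(6) unfolding \<Phi>_def by (auto intro!: lin_peval1 hG)
  qed
  have iI: "ICS {..<r} q" using A(4) unfolding ICS_def infinite_collective_strength_def by (simp add: lessThan_iff Bex_def)
  have hq: "\<forall>i\<in>{..<r}. hom 2 (q i)" using A(3) by simp
  obtain v where v: "KK \<Phi> v" "peval f v = a" "\<forall>i\<in>{..<r}. peval (q i) v = b i"
    using FINAL[OF finite_lessThan iI hq LCP A(1) A(2)] by blast
  have vv: "vec v" using v by (simp add: KK_def)
  show ?thesis
  proof (intro exI conjI allI impI)
    show "vec v" by (rule vv)
    show "peval f v = a" by (rule v(2))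
    fix i
    show "i < r \<Longrightarrow> peval (q i) v = b i" using v(3) by simp
    show "i < t \<Longrightarrow> peval (l i) v = 0"
    proof -
      assume "i < t"
      hence "peval (l i) \<in> \<Phi>" by (simp add: \<Phi>_def)
      from inPhi[OF this v(1)] show ?thesis .
    qed
    show "i < s \<Longrightarrow> peval (q' i) v = 0"
    proof -
      assume i: "i < s"
      have hp: "\<forall>j\<in>{..<N i}. hom 2 (pmul (G i j) (Hh i j))"
        using hom_pmul[OF hG(1) hG(2)] i by (simp add: numeral_2_eq_2)
      have "peval (q' i) v = peval (\<lambda>m. \<Sum>j\<in>{..<N i}. 1 * pmul (G i j) (Hh i j) m) v"
        using qE[OF i] by simp
      also have "\<dots> = (\<Sum>j\<in>{..<N i}. 1 * peval (pmul (G i j) (Hh i j)) v)"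
        using peval_comb[where I="{..<N i}" and q="\<lambda>j. pmul (G i j) (Hh i j)" and n=2 and v=v and c="\<lambda>_. 1"] hp vv by simp
      also have "\<dots> = 0"
      proof (intro sum.neutral ballI)
        fix j assume j: "j \<in> {..<N i}"
        have "peval (G i j) \<in> \<Phi>" using i j by (force simp: \<Phi>_def)
        hence "peval (G i j) v = 0" using inPhi v(1) by blast
        thus "1 * peval (pmul (G i j) (Hh i j)) v = 0"
          using peval_pmul[OF hG(1) hG(2) vv] i j by simp
      qed
      finally show ?thesis .
    qed
  qed
qed


end
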